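(* Let $\mu$ be a self-similar measure on $\mathbb{R}^2$ with respect to an IFS $\Phi$ of contracting similarities whose attractor is not contained in an affine line. \begin{enumerate} \item If either $|G_\Phi|\ge 5$ or $|G_\Phi\cap SO(\mathbb{R}^2)|>2$, then $\mu$ does not admit a $1$-slicing. \item If $\Phi$ satisfies the strong separation condition, then $\mu$ does not admit a $1$-slicing. \end{enumerate}
   Context: An IFS $\Phi=\{\phi_i\}_{i=1}^l$ ($l\ge 2$) consists of contracting similarities $\phi_i(z)=\alpha_iO_iz+t_i$ with $0<\alpha_i<1$, $O_i\in O(\mathbb{R}^2)$; its attractor $F$ is the unique nonempty compact set with $F=\bigcup_i\phi_i(F)$. $G_\Phi\le O(\mathbb{R}^2)$ is the group generated by $O_1,\dots,O_l$. The strong separation condition (SSC) means $\phi_i(F)\cap\phi_j(F)=\emptyset$ for $i\ne j$. A self-similar measure for $\Phi$ is the unique Borel probability measure with $\mu=\sum_i p_i\,\phi_i\mu$ for a probability vector $(p_1,\dots,p_l)$ with all $p_i>0$. For a line $V\in G(2,1)$ through the origin, $P_{V^\perp}$ denotes orthogonal projection onto $V^\perp$. $\mu$ admits a $1$-slicing if there is $V\in G(2,1)$ such that (a) $O_i(V)=V$ for every $i$, and (b) the conditional measures of $\mu$ on translates of $V$, obtained by disintegrating $\mu$ with respect to $P_{V^\perp}$, are $P_{V^\perp}\mu$-almost surely exact dimensional of dimension $1$. Otherwise $\mu$ does not admit a $1$-slicing. *)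

theory Defs
  imports "HOL-Probability.Probability"
begin

definition sim_map :: "(nat \<Rightarrow> real) \<Rightarrow> (nat \<Rightarrow> real^2^2) \<Rightarrow> (nat \<Rightarrow> real^2) \<Rightarrow> nat \<Rightarrow> real^2 \<Rightarrow> real^2"
  where "sim_map \<alpha> Orth t i z = \<alpha> i *\<^sub>R (Orth i *v z) + t i"

definition is_IFS :: "nat \<Rightarrow> (nat \<Rightarrow> real) \<Rightarrow> (nat \<Rightarrow> real^2^2) \<Rightarrow> (nat \<Rightarrow> real^2) \<Rightarrow> bool"
  where "is_IFS l \<alpha> Orth t \<longleftrightarrow> l \<ge> 2 \<and> (\<forall>i<l. 0 < \<alpha> i \<and> \<alpha> i < 1 \<and> orthogonal_matrix (Orth i))"

definition is_attractor :: "nat \<Rightarrow> (nat \<Rightarrow> real) \<Rightarrow> (nat \<Rightarrow> real^2^2) \<Rightarrow> (nat \<Rightarrow> real^2) \<Rightarrow> (real^2) set \<Rightarrow> bool"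
  where "is_attractor l \<alpha> Orth t F \<longleftrightarrow> F \<noteq> {} \<and> compact F \<and> F = (\<Union>i<l. sim_map \<alpha> Orth t i ` F)"

inductive_set gen_group :: "nat \<Rightarrow> (nat \<Rightarrow> real^2^2) \<Rightarrow> (real^2^2) set"
  for l :: nat and Orth :: "nat \<Rightarrow> real^2^2" where
  gen_id: "mat 1 \<in> gen_group l Orth"
| gen_gen: "i < l \<Longrightarrow> Orth i \<in> gen_group l Orth"
| gen_mult: "A \<in> gen_group l Orth \<Longrightarrow> B \<in> gen_group l Orth \<Longrightarrow> A ** B \<in> gen_group l Orth"
| gen_inv: "A \<in> gen_group l Orth \<Longrightarrow> matrix_inv A \<in> gen_group l Orth"

definition in_affine_line :: "(real^2) set \<Rightarrow> bool"
  where "in_affine_line F \<longleftrightarrow> (\<exists>a v. v \<noteq> 0 \<and> F \<subseteq> {a + s *\<^sub>R v | s. True})"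

definition SSC :: "nat \<Rightarrow> (nat \<Rightarrow> real) \<Rightarrow> (nat \<Rightarrow> real^2^2) \<Rightarrow> (nat \<Rightarrow> real^2) \<Rightarrow> (real^2) set \<Rightarrow> bool"
  where "SSC l \<alpha> Orth t F \<longleftrightarrow>
     (\<forall>i<l. \<forall>j<l. i \<noteq> j \<longrightarrow> sim_map \<alpha> Orth t i ` F \<inter> sim_map \<alpha> Orth t j ` F = {})"

definition self_similar_measure :: "nat \<Rightarrow> (nat \<Rightarrow> real) \<Rightarrow> (nat \<Rightarrow> real^2^2) \<Rightarrow> (nat \<Rightarrow> real^2)
    \<Rightarrow> (nat \<Rightarrow> real) \<Rightarrow> (real^2) measure \<Rightarrow> bool"
  where "self_similar_measure l \<alpha> Orth t p \<mu> \<longleftrightarrow>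
     (\<forall>i<l. 0 < p i) \<and> (\<Sum>i<l. p i) = 1 \<and>
     prob_space \<mu> \<and> sets \<mu> = sets borel \<and>
     (\<forall>A \<in> sets borel. emeasure \<mu> A =
        (\<Sum>i<l. ennreal (p i) * emeasure \<mu> (sim_map \<alpha> Orth t i -` A)))"

definition orth_proj :: "(real^2) set \<Rightarrow> real^2 \<Rightarrow> real^2"
  where "orth_proj W x = (THE y. y \<in> W \<and> x - y \<in> orthogonal_comp W)"

definition exact_dimensional :: "(real^2) measure \<Rightarrow> real \<Rightarrow> bool"
  where "exact_dimensional \<nu> d \<longleftrightarrow>
     (AE x in \<nu>. ((\<lambda>r. ln (measure \<nu> (cball x r)) / ln r) \<longlongrightarrow> d) (at_right 0))"

definition is_disintegration :: "(real^2) measure \<Rightarrow> (real^2 \<Rightarrow> real^2) \<Rightarrow> (real^2 \<Rightarrow> (real^2) measure) \<Rightarrow> bool"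
  where "is_disintegration \<mu> P \<kappa> \<longleftrightarrow>
     (AE y in distr \<mu> borel P. prob_space (\<kappa> y) \<and> sets (\<kappa> y) = sets borel
         \<and> emeasure (\<kappa> y) (P -` {y}) = 1) \<and>
     (\<forall>A \<in> sets borel. (\<lambda>y. emeasure (\<kappa> y) A) \<in> borel_measurable borel \<and>
         emeasure \<mu> A = (\<integral>\<^sup>+ y. emeasure (\<kappa> y) A \<partial>distr \<mu> borel P))"

definition admits_1_slicing :: "nat \<Rightarrow> (nat \<Rightarrow> real^2^2) \<Rightarrow> (real^2) measure \<Rightarrow> bool"
  where "admits_1_slicing l Orth \<mu> \<longleftrightarrow>
     (\<exists>V. subspace V \<and> dim V = 1 \<and> (\<forall>i<l. (\<lambda>z. Orth i *v z) ` V = V) \<and>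
        (\<exists>\<kappa>. is_disintegration \<mu> (orth_proj (orthogonal_comp V)) \<kappa> \<and>
           (AE y in distr \<mu> borel (orth_proj (orthogonal_comp V)). exact_dimensional (\<kappa> y) 1)))"

end

theory Submission
  imports Defs
begin


definition rot :: "real^2 \<Rightarrow> real^2" where "rot x = vector [-(x$2), x$1]"

lemma inner2: "(x::real^2) \<bullet> y = x$1*y$1 + x$2*y$2"
  by (simp add: inner_vec_def sum_2)

lemma rot_comp [simp]: "rot x $ 1 = -(x$2)" "rot x $ 2 = x$1"
  by (simp_all add: rot_def)

lemma rot_inner: "rot x \<bullet> x = 0" "x \<bullet> rot x = 0"
  by (simp_all add: inner2 algebra_simps)

lemma norm2_sq: "(norm (x::real^2))^2 = (x$1)^2 + (x$2)^2"
  unfolding power2_norm_eq_inner inner2 by (simp add: power2_eq_square)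

lemma norm_rot [simp]: "norm (rot x) = norm x"
  by (metis (no_types, lifting) norm2_sq norm_ge_zero power2_eq_iff_nonneg rot_comp add.commute power2_minus)

lemma decomp2:
  assumes "norm v = 1"
  shows "x = (x \<bullet> v) *\<^sub>R v + (x \<bullet> rot v) *\<^sub>R rot v"
proof -
  have h: "(v$1)^2 + (v$2)^2 = 1" using assms norm2_sq[of v] by simp
  show ?thesis unfolding vec_eq_iff forall_2
    apply (simp add: inner2)
    using h by algebra
qed

lemma perp2:
  assumes "norm v = 1" "x \<bullet> v = 0"
  shows "x = (x \<bullet> rot v) *\<^sub>R rot v"
  using decomp2[OF assms(1), of x] assms(2) by simp

lemma det_diag2:
  fixes A :: "real^2^2"
  assumes "norm v = 1" "A *v v = s1 *\<^sub>R v" "A *v rot v = s2 *\<^sub>R rot v"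
  shows "det A = s1 * s2"
proof -
  have h: "(v$1)^2 + (v$2)^2 = 1" using assms norm2_sq[of v] by simp
  have e: "A$1$1 * v$1 + A$1$2 * v$2 = s1 * v$1" "A$2$1 * v$1 + A$2$2 * v$2 = s1 * v$2"
          "A$1$1 * (-v$2) + A$1$2 * v$1 = s2 * (-v$2)" "A$2$1 * (-v$2) + A$2$2 * v$1 = s2 * v$1"
    using assms(2,3) unfolding vec_eq_iff forall_2
    by (simp_all add: matrix_vector_mult_def sum_2)
  show ?thesis unfolding det_2 using h e by algebra
qed

lemma orth_inner:
  assumes "orthogonal_matrix (A::real^2^2)"
  shows "(A *v x) \<bullet> (A *v y) = x \<bullet> y"
proof -
  have "orthogonal_transformation ((*v) A)"
    using assms orthogonal_transformation_matrix[of "(*v) A"] matrix_vector_mul_linear by simp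
  then show ?thesis unfolding orthogonal_transformation_def by blast
qed

lemma orth_norm:
  assumes "orthogonal_matrix (A::real^2^2)"
  shows "norm (A *v x) = norm x"
  using orth_inner[OF assms, of x x] by (simp add: norm_eq_sqrt_inner)

lemma orth_fix_line:
  fixes A :: "real^2^2"
  assumes A: "orthogonal_matrix A" and v: "norm v = 1"
    and inv: "(\<lambda>z. A *v z) ` range (\<lambda>k. k *\<^sub>R v) = range (\<lambda>k. k *\<^sub>R v)"
  shows "\<exists>s. (s = 1 \<or> s = -1) \<and> A *v v = s *\<^sub>R v"
    and "\<exists>s. (s = 1 \<or> s = -1) \<and> A *v rot v = s *\<^sub>R rot v"
proof -
  have "A *v v \<in> range (\<lambda>k. k *\<^sub>R v)"
  proof -
    have "v \<in> range (\<lambda>k. k *\<^sub>R v)" by (rule range_eqI[of _ _ 1]) simp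
    then have "A *v v \<in> (\<lambda>z. A *v z) ` range (\<lambda>k. k *\<^sub>R v)" by (rule imageI)
    then show ?thesis using inv by simp
  qed
  then obtain k where k: "A *v v = k *\<^sub>R v" by auto
  have "\<bar>k\<bar> = 1" using orth_norm[OF A, of v] k v by simp
  then have k1: "k = 1 \<or> k = -1" by linarith
  then show "\<exists>s. (s = 1 \<or> s = -1) \<and> A *v v = s *\<^sub>R v" using k by blast
  have "(A *v rot v) \<bullet> (A *v v) = 0" using orth_inner[OF A] rot_inner by simp
  then have "(A *v rot v) \<bullet> v = 0" using k k1 by auto
  then have "A *v rot v = ((A *v rot v) \<bullet> rot v) *\<^sub>R rot v" using perp2[OF v] by blast
  moreover have "\<bar>(A *v rot v) \<bullet> rot v\<bar> = 1"
    using orth_norm[OF A, of "rot v"] v calculation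
    by (metis mult.right_neutral norm_rot norm_scaleR)
  ultimately show "\<exists>s. (s = 1 \<or> s = -1) \<and> A *v rot v = s *\<^sub>R rot v"
    by (intro exI[of _ "(A *v rot v) \<bullet> rot v"]) linarith
qed



definition good :: "real^2 \<Rightarrow> real^2^2 \<Rightarrow> bool" where
  "good v A \<longleftrightarrow> invertible A \<and> (\<exists>s. (s = 1 \<or> s = -1) \<and> A *v v = s *\<^sub>R v)
     \<and> (\<exists>s. (s = 1 \<or> s = -1) \<and> A *v rot v = s *\<^sub>R rot v)"

lemma pm_mult: fixes A B :: "real^2^2" shows "A *v x = s *\<^sub>R x \<Longrightarrow> B *v x = t *\<^sub>R x \<Longrightarrow> (A ** B) *v x = (s*t) *\<^sub>R x"
proof -
  assume a: "A *v x = s *\<^sub>R x" "B *v x = t *\<^sub>R x"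
  have "(A ** B) *v x = A *v (B *v x)" by (simp add: matrix_vector_mul_assoc)
  also have "\<dots> = A *v (t *\<^sub>R x)" using a by simp
  also have "\<dots> = t *\<^sub>R (A *v x)" by (rule matrix_vector_mult_scaleR)
  also have "\<dots> = (s*t) *\<^sub>R x" using a by simp
  finally show ?thesis .
qed

lemma pm_sign: "(s::real) = 1 \<or> s = -1 \<Longrightarrow> t = 1 \<or> t = -1 \<Longrightarrow> s*t = 1 \<or> s*t = -1"
  by auto

lemma good_mult: "good v A \<Longrightarrow> good v B \<Longrightarrow> good v (A ** B)"
proof -
  assume a: "good v A" "good v B"
  obtain s1 s2 where s: "s1 = 1 \<or> s1 = -1" "A *v v = s1 *\<^sub>R v" "s2 = 1 \<or> s2 = -1" "A *v rot v = s2 *\<^sub>R rot v"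
    using a(1) unfolding good_def by blast
  obtain t1 t2 where t: "t1 = 1 \<or> t1 = -1" "B *v v = t1 *\<^sub>R v" "t2 = 1 \<or> t2 = -1" "B *v rot v = t2 *\<^sub>R rot v"
    using a(2) unfolding good_def by blast
  have "invertible (A ** B)" using a invertible_mult unfolding good_def by blast
  then show ?thesis unfolding good_def
    using pm_mult[OF s(2) t(2)] pm_mult[OF s(4) t(4)] pm_sign[OF s(1) t(1)] pm_sign[OF s(3) t(3)] by blast
qed

lemma pm_inv:
  fixes A' :: "real^2^2"
  assumes "A' ** A = mat 1" "A *v x = s *\<^sub>R x" "s = 1 \<or> s = -1"
  shows "A' *v x = s *\<^sub>R x"
proof -
  have "A' *v (A *v x) = x" by (simp add: matrix_vector_mul_assoc assms(1))
  then have "s *\<^sub>R (A' *v x) = x" using assms(2) by (simp add: matrix_vector_mult_scaleR)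
  then show ?thesis using assms(3) by (auto simp: minus_equation_iff)
qed

lemma good_inv: "good v A \<Longrightarrow> good v (matrix_inv A)"
proof -
  assume g: "good v A"
  then have "\<exists>A'. A ** A' = mat 1 \<and> A' ** A = mat 1" unfolding good_def invertible_def by blast
  then have h: "A ** matrix_inv A = mat 1 \<and> matrix_inv A ** A = mat 1"
    unfolding matrix_inv_def by (rule someI_ex)
  then have "invertible (matrix_inv A)" unfolding invertible_def by blast
  then show ?thesis using g h pm_inv unfolding good_def by metis
qed

lemma good_group:
  assumes "\<And>i. i < l \<Longrightarrow> good v (Orth i)" and "A \<in> gen_group l Orth"
  shows "good v A"
  using assms(2)
proof induction
  case gen_id
  then show ?case unfolding good_def invertible_def by (auto intro: exI[of _ 1])
qed (auto intro: assms(1) good_mult good_inv)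

lemma mat_eq_basis:
  fixes A B :: "real^2^2"
  assumes v: "norm v = 1" and "A *v v = B *v v" "A *v rot v = B *v rot v"
  shows "A = B"
proof -
  have "A *v x = B *v x" for x
  proof -
    have "A *v x = A *v ((x \<bullet> v) *\<^sub>R v + (x \<bullet> rot v) *\<^sub>R rot v)" using decomp2[OF v, of x] by simp
    also have "\<dots> = (x \<bullet> v) *\<^sub>R (A *v v) + (x \<bullet> rot v) *\<^sub>R (A *v rot v)"
      by (simp only: matrix_vector_right_distrib matrix_vector_mult_scaleR)
    also have "\<dots> = (x \<bullet> v) *\<^sub>R (B *v v) + (x \<bullet> rot v) *\<^sub>R (B *v rot v)" using assms by simp
    also have "\<dots> = B *v ((x \<bullet> v) *\<^sub>R v + (x \<bullet> rot v) *\<^sub>R rot v)"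
      by (simp only: matrix_vector_right_distrib matrix_vector_mult_scaleR)
    also have "\<dots> = B *v x" using decomp2[OF v, of x] by simp
    finally show ?thesis .
  qed
  then show ?thesis by (simp add: matrix_eq)
qed



lemma card2: "card {a, b} \<le> 2"
  by (cases "a = b") auto

lemma part1_core:
  assumes v: "norm v = 1" and g: "\<And>A. A \<in> G \<Longrightarrow> good v A"
  shows "finite G \<and> card G \<le> 4 \<and> finite {A\<in>G. det A = 1} \<and> card {A\<in>G. det A = 1} \<le> 2"
proof -
  let ?f = "\<lambda>A::real^2^2. (A *v v, A *v rot v)"
  have inj: "inj_on ?f G" by (rule inj_onI) (use mat_eq_basis[OF v] in auto)
  have sub: "?f ` G \<subseteq> {v, -v} \<times> {rot v, - rot v}"
  proof
    fix p assume "p \<in> ?f ` G"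
    then obtain A where A: "A \<in> G" "p = ?f A" by auto
    obtain s1 s2 where s: "s1 = 1 \<or> s1 = -1" "A *v v = s1 *\<^sub>R v" "s2 = 1 \<or> s2 = -1" "A *v rot v = s2 *\<^sub>R rot v"
      using g[OF A(1)] unfolding good_def by blast
    show "p \<in> {v, -v} \<times> {rot v, - rot v}" using s A(2) by auto
  qed
  have "finite (?f ` G)" by (rule finite_subset[OF sub]) simp
  then have fin: "finite G" using finite_image_iff[OF inj] by simp
  have "card G = card (?f ` G)" using card_image[OF inj] by simp
  also have "\<dots> \<le> card ({v, -v} \<times> {rot v, - rot v})" by (rule card_mono) (use sub in auto)
  also have "\<dots> \<le> 4" unfolding card_cartesian_product using card2 mult_le_mono[OF card2 card2] by simp
  finally have c4: "card G \<le> 4" .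
  have sub2: "?f ` {A\<in>G. det A = 1} \<subseteq> {(v, rot v), (-v, - rot v)}"
  proof
    fix p assume "p \<in> ?f ` {A\<in>G. det A = 1}"
    then obtain A where A: "A \<in> G" "det A = 1" "p = ?f A" by auto
    obtain s1 s2 where s: "s1 = 1 \<or> s1 = -1" "A *v v = s1 *\<^sub>R v" "s2 = 1 \<or> s2 = -1" "A *v rot v = s2 *\<^sub>R rot v"
      using g[OF A(1)] unfolding good_def by blast
    have "s1 * s2 = 1" using det_diag2[OF v s(2) s(4)] A(2) by simp
    then show "p \<in> {(v, rot v), (-v, - rot v)}" using s A(3) by auto
  qed
  have inj2: "inj_on ?f {A\<in>G. det A = 1}" using inj by (rule inj_on_subset) auto
  have "card {A\<in>G. det A = 1} = card (?f ` {A\<in>G. det A = 1})" using card_image[OF inj2] by simp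
  also have "\<dots> \<le> card {(v, rot v), (-v, - rot v)}" by (rule card_mono) (use sub2 in auto)
  also have "\<dots> \<le> 2" by (rule card2)
  finally show ?thesis using fin c4 by simp
qed



locale ssc_setup =
  fixes l :: nat and \<alpha> :: "nat \<Rightarrow> real" and Orth :: "nat \<Rightarrow> real^2^2" and t :: "nat \<Rightarrow> real^2"
    and F :: "(real^2) set" and v :: "real^2"
  assumes ifs: "is_IFS l \<alpha> Orth t" and att: "is_attractor l \<alpha> Orth t F"
    and ssc: "SSC l \<alpha> Orth t F" and vunit: "norm v = 1"
    and vinv: "\<forall>i<l. \<exists>s. (s = 1 \<or> s = -1) \<and> Orth i *v v = s *\<^sub>R v"
begin

abbreviation "\<phi> \<equiv> sim_map \<alpha> Orth t"

definition \<sigma> :: "nat \<Rightarrow> real" where "\<sigma> i = (SOME s. (s = 1 \<or> s = -1) \<and> Orth i *v v = s *\<^sub>R v)"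

lemma sigma: "i < l \<Longrightarrow> (\<sigma> i = 1 \<or> \<sigma> i = -1) \<and> Orth i *v v = \<sigma> i *\<^sub>R v"
proof -
  assume "i < l"
  then have "\<exists>s. (s = 1 \<or> s = -1) \<and> Orth i *v v = s *\<^sub>R v" using vinv by blast
  then show ?thesis unfolding \<sigma>_def by (rule someI_ex)
qed

lemma sigma_abs: "i < l \<Longrightarrow> \<bar>\<sigma> i\<bar> = 1"
  using sigma by fastforce

lemma l2: "l \<ge> 2" using ifs unfolding is_IFS_def by simp
lemma alpha_pos: "i < l \<Longrightarrow> 0 < \<alpha> i" using ifs unfolding is_IFS_def by simp
lemma alpha_lt1: "i < l \<Longrightarrow> \<alpha> i < 1" using ifs unfolding is_IFS_def by simp
lemma orth: "i < l \<Longrightarrow> orthogonal_matrix (Orth i)" using ifs unfolding is_IFS_def by simp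

lemma F_ne: "F \<noteq> {}" using att unfolding is_attractor_def by simp
lemma F_compact: "compact F" using att unfolding is_attractor_def by simp
lemma F_closed: "closed F" using F_compact compact_imp_closed by blast
lemma F_eq: "F = (\<Union>i<l. \<phi> i ` F)" using att unfolding is_attractor_def by simp

lemma F_bounded: obtains B where "B > 0" "\<And>x. x \<in> F \<Longrightarrow> norm x \<le> B"
proof -
  obtain B where "\<forall>x\<in>F. norm x \<le> B" using compact_imp_bounded[OF F_compact] bounded_iff by blast
  then show ?thesis using that[of "max B 1"] by force
qed

lemma phi_in_F: "i < l \<Longrightarrow> x \<in> F \<Longrightarrow> \<phi> i x \<in> F"
  using F_eq by blast

lemma F_piece: "x \<in> F \<Longrightarrow> \<exists>i<l. \<exists>w\<in>F. x = \<phi> i w"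
  using F_eq by blast

lemma orth_vec_inv: "i < l \<Longrightarrow> Orth i *v (transpose (Orth i) *v p) = p"
proof -
  assume i: "i < l"
  have "Orth i *v (transpose (Orth i) *v p) = (Orth i ** transpose (Orth i)) *v p"
    by (simp only: matrix_vector_mul_assoc)
  also have "\<dots> = p" using orth[OF i] unfolding orthogonal_matrix_def by simp
  finally show ?thesis .
qed

lemma phi_surj: "i < l \<Longrightarrow> \<exists>y. \<phi> i y = p"
proof -
  assume i: "i < l"
  let ?y = "(1 / \<alpha> i) *\<^sub>R (transpose (Orth i) *v (p - t i))"
  have "\<phi> i ?y = \<alpha> i *\<^sub>R ((1 / \<alpha> i) *\<^sub>R (p - t i)) + t i"
    by (simp only: sim_map_def matrix_vector_mult_scaleR orth_vec_inv[OF i])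
  also have "\<dots> = p" using alpha_pos[OF i] by simp
  finally have "\<phi> i ?y = p" .
  then show ?thesis by blast
qed

lemma dist_phi: "i < l \<Longrightarrow> dist (\<phi> i x) (\<phi> i y) = \<alpha> i * dist x y"
proof -
  assume i: "i < l"
  have "\<phi> i x - \<phi> i y = \<alpha> i *\<^sub>R (Orth i *v (x - y))"
    by (simp add: sim_map_def matrix_vector_mult_diff_distrib scaleR_diff_right)
  then show ?thesis using alpha_pos[OF i] orth_norm[OF orth[OF i]]
    by (simp add: dist_norm)
qed

lemma phi_inj: "i < l \<Longrightarrow> \<phi> i x = \<phi> i y \<Longrightarrow> x = y"
  using dist_phi alpha_pos by (metis dist_eq_0_iff mult_eq_0_iff order_less_irrefl)

lemma phi_line: "i < l \<Longrightarrow> \<phi> i (x + u *\<^sub>R v) = \<phi> i x + (\<alpha> i * \<sigma> i * u) *\<^sub>R v"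
  using sigma[of i]
  by (simp add: sim_map_def matrix_vector_right_distrib matrix_vector_mult_scaleR algebra_simps)

lemma amax: obtains a where "0 < a" "a < 1" "\<And>i. i < l \<Longrightarrow> \<alpha> i \<le> a"
proof -
  let ?a = "Max (\<alpha> ` {..<l})"
  have "0 \<in> {..<l}" using l2 by simp
  then have ne: "\<alpha> ` {..<l} \<noteq> {}" by blast
  have "?a \<in> \<alpha> ` {..<l}" using Max_in[OF _ ne] by simp
  then have "0 < ?a" "?a < 1" using alpha_pos alpha_lt1 by auto
  then show ?thesis using that[of ?a] by simp
qed

lemma amin: obtains a where "0 < a" "\<And>i. i < l \<Longrightarrow> a \<le> \<alpha> i"
proof -
  let ?a = "Min (\<alpha> ` {..<l})"
  have "0 \<in> {..<l}" using l2 by simp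
  then have ne: "\<alpha> ` {..<l} \<noteq> {}" by blast
  have "?a \<in> \<alpha> ` {..<l}" using Min_in[OF _ ne] by simp
  then have "0 < ?a" using alpha_pos by auto
  then show ?thesis using that[of ?a] by simp
qed

lemma piece_compact: "i < l \<Longrightarrow> compact (\<phi> i ` F)"
proof -
  assume i: "i < l"
  have "continuous_on F (\<phi> i)" unfolding sim_map_def
    by (intro continuous_intros)
  then show ?thesis using F_compact compact_continuous_image by blast
qed

lemma sep: obtains \<delta> where "\<delta> > 0"
  "\<And>i j x y. i < l \<Longrightarrow> j < l \<Longrightarrow> i \<noteq> j \<Longrightarrow> x \<in> F \<Longrightarrow> y \<in> F \<Longrightarrow> \<delta> \<le> dist (\<phi> i x) (\<phi> j y)"
proof -
  have "\<forall>p\<in>{..<l}\<times>{..<l}. \<exists>d>0. fst p \<noteq> snd p \<longrightarrow> (\<forall>x\<in>\<phi> (fst p) ` F. \<forall>y\<in>\<phi> (snd p) ` F. d \<le> dist x y)"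
  proof
    fix p assume p: "p \<in> {..<l}\<times>{..<l}"
    show "\<exists>d>0. fst p \<noteq> snd p \<longrightarrow> (\<forall>x\<in>\<phi> (fst p) ` F. \<forall>y\<in>\<phi> (snd p) ` F. d \<le> dist x y)"
    proof (cases "fst p = snd p")
      case True then show ?thesis using zero_less_one by blast
    next
      case False
      from p have "fst p < l" "snd p < l" by auto
      then have "\<phi> (fst p) ` F \<inter> \<phi> (snd p) ` F = {}" using ssc False unfolding SSC_def by blast
      then obtain d where "d > 0" "\<forall>x\<in>\<phi> (fst p) ` F. \<forall>y\<in>\<phi> (snd p) ` F. d \<le> dist x y"
        using separate_compact_closed[OF piece_compact[of "fst p"] compact_imp_closed[OF piece_compact[of "snd p"]]]
          \<open>fst p < l\<close> \<open>snd p < l\<close> by blast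
      then show ?thesis by blast
    qed
  qed
  then obtain d where d: "\<forall>p\<in>{..<l}\<times>{..<l}. d p > 0 \<and> (fst p \<noteq> snd p \<longrightarrow> (\<forall>x\<in>\<phi> (fst p) ` F. \<forall>y\<in>\<phi> (snd p) ` F. d p \<le> dist x y))"
    by metis
  let ?D = "d ` ({..<l}\<times>{..<l})"
  have fin: "finite ?D" by simp
  have "(0,0) \<in> {..<l}\<times>{..<l}" using l2 by simp
  then have ne: "?D \<noteq> {}" by blast
  have "Min ?D \<in> ?D" using Min_in[OF fin ne] .
  then have pos: "Min ?D > 0" using d by auto
  show ?thesis
  proof (rule that[OF pos])
    fix i j x y assume a: "i < l" "j < l" "i \<noteq> j" "x \<in> F" "y \<in> F"
    have "Min ?D \<le> d (i, j)" using a by (intro Min_le) auto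
    also have "d (i,j) \<le> dist (\<phi> i x) (\<phi> j y)" using d a by force
    finally show "Min ?D \<le> dist (\<phi> i x) (\<phi> j y)" .
  qed
qed

end

lemma un_not: "y \<in> A \<union> B \<Longrightarrow> y \<notin> B \<Longrightarrow> y \<in> A" by blast
lemma disj_notin: "B \<inter> S = {} \<Longrightarrow> y \<in> S \<Longrightarrow> y \<notin> B" by blast

context ssc_setup begin

lemma connected_in_piece:
  assumes S: "connected S" "S \<noteq> {}" "S \<subseteq> F"
  shows "\<exists>i<l. S \<subseteq> \<phi> i ` F"
proof -
  obtain x where x: "x \<in> S" using S(2) by blast
  then obtain i where i: "i < l" "x \<in> \<phi> i ` F" using S(3) F_eq by blast
  let ?A = "\<phi> i ` F" and ?B = "\<Union>j\<in>{j. j < l \<and> j \<noteq> i}. \<phi> j ` F"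
  have cA: "closed ?A" using piece_compact[OF i(1)] compact_imp_closed by blast
  have cB: "closed ?B" using piece_compact compact_imp_closed by (intro closed_UN) auto
  have d: "\<phi> i ` F \<inter> \<phi> j ` F = {}" if "j < l" "j \<noteq> i" for j
    using ssc i(1) that unfolding SSC_def by (metis (no_types))
  have AB: "?A \<inter> ?B = {}"
  proof (rule equals0I)
    fix y assume "y \<in> ?A \<inter> ?B"
    then obtain j where "j < l" "j \<noteq> i" "y \<in> \<phi> i ` F" "y \<in> \<phi> j ` F" by blast
    then show False using d by blast
  qed
  have sub: "S \<subseteq> ?A \<union> ?B" using S(3) F_eq by blast
  have nc: "\<not> (closed ?A \<and> closed ?B \<and> S \<subseteq> ?A \<union> ?B \<and> ?A \<inter> ?B \<inter> S = {} \<and> ?A \<inter> S \<noteq> {} \<and> ?B \<inter> S \<noteq> {})"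
  proof -
    have H: "\<not> (\<exists>A B. closed A \<and> closed B \<and> S \<subseteq> A \<union> B \<and> A \<inter> B \<inter> S = {} \<and> A \<inter> S \<noteq> {} \<and> B \<inter> S \<noteq> {})"
      by (rule iffD1[OF connected_closed S(1)])
    show ?thesis using H by (intro notI) (erule notE, rule exI[of _ ?A], rule exI[of _ ?B], assumption)
  qed
  have "?A \<inter> S \<noteq> {}" using x i(2) by blast
  moreover have "?A \<inter> ?B \<inter> S = {}" using AB by blast
  ultimately have "\<not> ?B \<inter> S \<noteq> {}" using nc cA cB sub by simp
  then have BS: "?B \<inter> S = {}" by simp
  have "S \<subseteq> ?A"
  proof
    fix y assume y: "y \<in> S"
    have "y \<in> ?A \<union> ?B" using sub y by (rule subsetD)
    moreover have "y \<notin> ?B" using BS y by (rule disj_notin)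
    ultimately show "y \<in> ?A" by (rule un_not)
  qed
  then show ?thesis using i(1) by (intro exI[of _ i] conjI)
qed

lemma segment_connected: "connected ((\<lambda>u. z + u *\<^sub>R v) ` {a..b})"
  by (intro connected_continuous_image continuous_intros) simp

lemma segment_step:
  assumes L: "L > 0" and seg: "\<forall>u. \<bar>u\<bar> \<le> L \<longrightarrow> z + u *\<^sub>R v \<in> F"
    and a: "\<And>i. i < l \<Longrightarrow> \<alpha> i \<le> a" and apos: "0 < a"
  shows "\<exists>z'. \<forall>u. \<bar>u\<bar> \<le> L / a \<longrightarrow> z' + u *\<^sub>R v \<in> F"
proof -
  let ?S = "(\<lambda>u. z + u *\<^sub>R v) ` {-L..L}"
  have "?S \<noteq> {}" using L by auto
  moreover have "?S \<subseteq> F" using seg by auto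
  ultimately obtain i where i: "i < l" "?S \<subseteq> \<phi> i ` F"
    using connected_in_piece segment_connected by blast
  obtain y where y: "\<phi> i y = z" using phi_surj[OF i(1)] by blast
  have "y + c *\<^sub>R v \<in> F" if c: "\<bar>c\<bar> \<le> L / a" for c
  proof -
    have "\<bar>\<alpha> i * \<sigma> i * c\<bar> = \<alpha> i * \<bar>c\<bar>" using sigma_abs[OF i(1)] alpha_pos[OF i(1)] by (simp add: abs_mult)
    also have "\<dots> \<le> a * (L / a)" using a[OF i(1)] alpha_pos[OF i(1)] c by (intro mult_mono) auto
    also have "\<dots> = L" using apos by simp
    finally have "\<alpha> i * \<sigma> i * c \<in> {-L..L}" by (simp add: abs_le_iff)
    then have "z + (\<alpha> i * \<sigma> i * c) *\<^sub>R v \<in> ?S" by (rule imageI)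
    then have "\<phi> i (y + c *\<^sub>R v) \<in> \<phi> i ` F" using phi_line[OF i(1)] y i(2) by auto
    then show ?thesis using phi_inj[OF i(1)] by blast
  qed
  then show ?thesis by blast
qed

lemma no_segment:
  assumes L: "L > 0" and seg: "\<forall>u. \<bar>u\<bar> \<le> L \<longrightarrow> z + u *\<^sub>R v \<in> F"
  shows False
proof -
  obtain a where a: "0 < a" "a < 1" "\<And>i. i < l \<Longrightarrow> \<alpha> i \<le> a" using amax by blast
  obtain B where B: "B > 0" "\<And>x. x \<in> F \<Longrightarrow> norm x \<le> B" using F_bounded by blast
  have ind: "\<exists>z. \<forall>u. \<bar>u\<bar> \<le> L / a ^ n \<longrightarrow> z + u *\<^sub>R v \<in> F" for n
  proof (induction n)
    case 0 then show ?case using seg by auto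
  next
    case (Suc n)
    then obtain z where "\<forall>u. \<bar>u\<bar> \<le> L / a ^ n \<longrightarrow> z + u *\<^sub>R v \<in> F" by blast
    from segment_step[OF _ this a(3) a(1)] obtain z' where "\<forall>u. \<bar>u\<bar> \<le> L / a ^ n / a \<longrightarrow> z' + u *\<^sub>R v \<in> F"
      using L a by auto
    then show ?case by (auto simp: field_simps)
  qed
  obtain n where n: "a ^ n < L / B" using real_arch_pow_inv[of "L / B" a] L B a by auto
  have "B < L / a ^ n" using n B a by (simp add: field_simps)
  obtain z where z: "\<forall>u. \<bar>u\<bar> \<le> L / a ^ n \<longrightarrow> z + u *\<^sub>R v \<in> F" using ind by blast
  let ?R = "L / a ^ n"
  have "?R > 0" using L a by simp
  have p1: "norm (z + ?R *\<^sub>R v) \<le> B" using z B(2) \<open>?R > 0\<close> by simp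
  have m: "z + (- ?R) *\<^sub>R v \<in> F" using z[rule_format, of "- ?R"] \<open>?R > 0\<close> by linarith
  have p2: "norm (z + (- ?R) *\<^sub>R v) \<le> B" by (rule B(2)[OF m])
  have "(z + ?R *\<^sub>R v) - (z + (- ?R) *\<^sub>R v) = (2 * ?R) *\<^sub>R v" by (simp add: scaleR_left_distrib[symmetric] del: scaleR_left_distrib)
  then have "norm ((z + ?R *\<^sub>R v) - (z + (- ?R) *\<^sub>R v)) = 2 * ?R" using vunit L a(1) by simp
  moreover have "norm ((z + ?R *\<^sub>R v) - (z + (- ?R) *\<^sub>R v)) \<le> 2 * B"
    using norm_triangle_ineq4[of "z + ?R *\<^sub>R v" "z + (- ?R) *\<^sub>R v"] p1 p2 by linarith
  ultimately show False using \<open>B < ?R\<close> by linarith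
qed

end

context ssc_setup begin

lemma gap_fixed:
  assumes lam: "lam > 0"
  obtains g where "g > 0" "g \<le> lam"
    "\<And>z. \<exists>b. 0 \<le> b \<and> b + g \<le> lam \<and> (\<forall>u. b \<le> u \<and> u \<le> b + g \<longrightarrow> z + u *\<^sub>R v \<notin> F)"
proof (rule ccontr)
  assume neg: "\<not> thesis"
  define gs where "gs n = lam / real (Suc n)" for n
  have gpos: "gs n > 0" for n using lam by (simp add: gs_def)
  have gle: "gs n \<le> lam" for n using lam by (simp add: gs_def field_simps)
  have "\<exists>z. \<forall>b. 0 \<le> b \<and> b + gs n \<le> lam \<longrightarrow> (\<exists>u. b \<le> u \<and> u \<le> b + gs n \<and> z + u *\<^sub>R v \<in> F)" for n
  proof (rule ccontr)
    assume "\<not> ?thesis"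
    then have "\<And>z. \<exists>b. 0 \<le> b \<and> b + gs n \<le> lam \<and> (\<forall>u. b \<le> u \<and> u \<le> b + gs n \<longrightarrow> z + u *\<^sub>R v \<notin> F)"
      by blast
    then show False using neg that gpos[of n] gle[of n] by blast
  qed
  then obtain Z where Z: "\<And>n b. 0 \<le> b \<Longrightarrow> b + gs n \<le> lam \<Longrightarrow> (\<exists>u. b \<le> u \<and> u \<le> b + gs n \<and> Z n + u *\<^sub>R v \<in> F)"
    by metis
  obtain B where B: "B > 0" "\<And>x. x \<in> F \<Longrightarrow> norm x \<le> B" using F_bounded by blast
  have Zb: "Z n \<in> cball 0 (B + lam)" for n
  proof -
    obtain u where u: "0 \<le> u" "u \<le> gs n" "Z n + u *\<^sub>R v \<in> F" using Z[of 0 n] gle[of n] by auto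
    have "norm (Z n) \<le> norm (Z n + u *\<^sub>R v) + norm (u *\<^sub>R v)"
      using norm_triangle_ineq4[of "Z n + u *\<^sub>R v" "u *\<^sub>R v"] by simp
    also have "\<dots> \<le> B + lam" using B(2)[OF u(3)] u(1,2) gle[of n] vunit by simp
    finally show ?thesis by simp
  qed
  obtain z0 r where r: "strict_mono (r :: nat \<Rightarrow> nat)" "(Z \<circ> r) \<longlonglongrightarrow> z0"
    using seq_compactE[OF compact_imp_seq_compact[OF compact_cball] ] Zb by metis
  have lim0: "(\<lambda>n. lam / real (Suc n)) \<longlonglongrightarrow> 0"
    using tendsto_mult_right_zero[OF LIMSEQ_inverse_real_of_nat, of lam] by (simp add: divide_inverse)
  have inF: "z0 + u *\<^sub>R v \<in> F" if u: "0 \<le> u" "u \<le> lam" for u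
  proof -
    have ex: "\<forall>n. \<exists>w. \<bar>w - u\<bar> \<le> gs n \<and> Z n + w *\<^sub>R v \<in> F"
    proof
      fix n
      let ?b = "min u (lam - gs n)"
      have "0 \<le> ?b" using u gle[of n] by simp
      moreover have "?b + gs n \<le> lam" by simp
      ultimately obtain w where w: "?b \<le> w" "w \<le> ?b + gs n" "Z n + w *\<^sub>R v \<in> F" using Z by blast
      have "\<bar>w - u\<bar> \<le> gs n" using w(1,2) u by (auto simp: min_def split: if_splits)
      then show "\<exists>w. \<bar>w - u\<bar> \<le> gs n \<and> Z n + w *\<^sub>R v \<in> F" using w(3) by blast
    qed
    from choice[OF ex] obtain W where W': "\<forall>n. \<bar>W n - u\<bar> \<le> gs n \<and> Z n + W n *\<^sub>R v \<in> F" by blast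
    have W: "\<And>n. \<bar>W n - u\<bar> \<le> gs n" "\<And>n. Z n + W n *\<^sub>R v \<in> F" using W' by auto
    have "norm (W (r n) - u) \<le> lam / real (Suc n)" for n
    proof -
      have "n \<le> r n" using seq_suble[OF r(1)] .
      then have "gs (r n) \<le> lam / real (Suc n)" unfolding gs_def using lam
        by (intro divide_left_mono) auto
      then show ?thesis using W(1)[of "r n"] by simp
    qed
    then have "(\<lambda>n. W (r n) - u) \<longlonglongrightarrow> 0"
      by (intro Lim_null_comparison[OF _ lim0]) simp
    then have Wl: "(\<lambda>n. W (r n)) \<longlonglongrightarrow> u" by (simp add: LIM_zero_iff)
    have lim: "(\<lambda>n. Z (r n) + W (r n) *\<^sub>R v) \<longlonglongrightarrow> z0 + u *\<^sub>R v"
      using r(2) Wl unfolding comp_def by (intro tendsto_intros) auto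
    have Fm: "\<And>n. (\<lambda>n. Z (r n) + W (r n) *\<^sub>R v) n \<in> F" using W(2) by simp
    show ?thesis by (rule closed_sequentially[OF F_closed Fm lim])
  qed
  have "\<forall>w. \<bar>w\<bar> \<le> lam / 2 \<longrightarrow> (z0 + (lam / 2) *\<^sub>R v) + w *\<^sub>R v \<in> F"
  proof (intro allI impI)
    fix w assume "\<bar>w\<bar> \<le> lam / 2"
    then have "z0 + (lam / 2 + w) *\<^sub>R v \<in> F" using inF by simp
    then show "(z0 + (lam / 2) *\<^sub>R v) + w *\<^sub>R v \<in> F" by (simp add: algebra_simps)
  qed
  then show False using no_segment lam by (metis half_gt_zero)
qed

end

context ssc_setup begin

definition gapQ :: "real \<Rightarrow> real \<Rightarrow> bool" where
  "gapQ c r \<longleftrightarrow> (\<forall>z. \<exists>b. 0 \<le> b \<and> b + c * r \<le> r \<and> (\<forall>u. b \<le> u \<and> u \<le> b + c * r \<longrightarrow> z + u *\<^sub>R v \<notin> F))"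

lemma dist_line: "dist (z + a *\<^sub>R v) (z + b *\<^sub>R v) = \<bar>a - b\<bar>"
proof -
  have "(z + a *\<^sub>R v) - (z + b *\<^sub>R v) = (a - b) *\<^sub>R v" by (simp add: algebra_simps)
  then show ?thesis using vunit by (simp add: dist_norm)
qed

lemma gap_step:
  assumes c: "0 < c" "c \<le> 1" and r: "0 < r" "r < \<delta>"
    and \<delta>: "\<And>i j x y. i < l \<Longrightarrow> j < l \<Longrightarrow> i \<noteq> j \<Longrightarrow> x \<in> F \<Longrightarrow> y \<in> F \<Longrightarrow> \<delta> \<le> dist (\<phi> i x) (\<phi> j y)"
    and Qi: "\<And>i. i < l \<Longrightarrow> gapQ c (r / \<alpha> i)"
  shows "gapQ c r"
  unfolding gapQ_def
proof
  fix z
  show "\<exists>b. 0 \<le> b \<and> b + c * r \<le> r \<and> (\<forall>u. b \<le> u \<and> u \<le> b + c * r \<longrightarrow> z + u *\<^sub>R v \<notin> F)"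
  proof (cases "\<exists>u0. 0 \<le> u0 \<and> u0 \<le> r \<and> z + u0 *\<^sub>R v \<in> F")
    case False
    have cr: "c * r \<le> r" using mult_right_mono[of c 1 r] c r by simp
    show ?thesis
    proof (intro exI[of _ 0] conjI allI impI)
      show "0 \<le> (0::real)" by simp
      show "0 + c * r \<le> r" using cr by simp
      fix u assume "0 \<le> u \<and> u \<le> 0 + c * r"
      then have "0 \<le> u" "u \<le> r" using cr by auto
      then show "z + u *\<^sub>R v \<notin> F" using False by blast
    qed
  next
    case True
    then obtain u0 where u0: "0 \<le> u0" "u0 \<le> r" "z + u0 *\<^sub>R v \<in> F" by blast
    obtain i w0 where i: "i < l" "w0 \<in> F" "z + u0 *\<^sub>R v = \<phi> i w0" using F_piece[OF u0(3)] by blast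
    have piece: "z + u *\<^sub>R v \<in> \<phi> i ` F" if u: "0 \<le> u" "u \<le> r" "z + u *\<^sub>R v \<in> F" for u
    proof -
      obtain j w where j: "j < l" "w \<in> F" "z + u *\<^sub>R v = \<phi> j w" using F_piece[OF u(3)] by blast
      have "j = i"
      proof (rule ccontr)
        assume "j \<noteq> i"
        then have "\<delta> \<le> dist (\<phi> i w0) (\<phi> j w)" using \<delta> i j by metis
        also have "\<dots> = \<bar>u0 - u\<bar>" using i(3) j(3) dist_line by metis
        also have "\<dots> \<le> r" using u u0 by linarith
        finally show False using r by linarith
      qed
      then show ?thesis using j by blast
    qed
    have ai: "0 < \<alpha> i" using alpha_pos[OF i(1)] .
    obtain b' where b': "0 \<le> b'" "b' + c * (r / \<alpha> i) \<le> r / \<alpha> i" and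
      gapb: "\<And>y. \<exists>b'. 0 \<le> b' \<and> b' + c * (r / \<alpha> i) \<le> r / \<alpha> i \<and> (\<forall>u. b' \<le> u \<and> u \<le> b' + c * (r / \<alpha> i) \<longrightarrow> y + u *\<^sub>R v \<notin> F)"
      using Qi[OF i(1)] unfolding gapQ_def by (metis order_refl add_0 mult_nonneg_nonneg)
    have key: "b' + c * (r / \<alpha> i) \<le> r / \<alpha> i \<Longrightarrow> \<alpha> i * b' + c * r \<le> r" for b'
    proof -
      assume "b' + c * (r / \<alpha> i) \<le> r / \<alpha> i"
      then have "\<alpha> i * (b' + c * (r / \<alpha> i)) \<le> \<alpha> i * (r / \<alpha> i)" using ai by (intro mult_left_mono) auto
      then show ?thesis using ai by (simp add: algebra_simps)
    qed
    have sg: "\<sigma> i = 1 \<or> \<sigma> i = -1" using sigma[OF i(1)] by simp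
    then show ?thesis
    proof
      assume s1: "\<sigma> i = 1"
      obtain y where y: "\<phi> i y = z" using phi_surj[OF i(1)] by blast
      obtain b' where b': "0 \<le> b'" "b' + c * (r / \<alpha> i) \<le> r / \<alpha> i"
        "\<forall>u. b' \<le> u \<and> u \<le> b' + c * (r / \<alpha> i) \<longrightarrow> y + u *\<^sub>R v \<notin> F"
        using gapb[of y] by blast
      have kb: "\<alpha> i * b' + c * r \<le> r" using key[OF b'(2)] .
      show ?thesis
      proof (intro exI[of _ "\<alpha> i * b'"] conjI allI impI)
        show "0 \<le> \<alpha> i * b'" using ai b'(1) by simp
        show "\<alpha> i * b' + c * r \<le> r" by (rule kb)
        fix u assume u: "\<alpha> i * b' \<le> u \<and> u \<le> \<alpha> i * b' + c * r"
        have u1: "b' \<le> u / \<alpha> i" using u ai by (simp add: field_simps)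
        have u2: "u / \<alpha> i \<le> b' + c * (r / \<alpha> i)" using u ai by (simp add: field_simps)
        have img: "\<phi> i (y + (u / \<alpha> i) *\<^sub>R v) = z + u *\<^sub>R v" using phi_line[OF i(1)] y s1 ai by simp
        show "z + u *\<^sub>R v \<notin> F"
        proof
          assume zF: "z + u *\<^sub>R v \<in> F"
          have "0 \<le> \<alpha> i * b'" using ai b'(1) by simp
          then have "0 \<le> u" "u \<le> r" using u kb by linarith+
          then have "z + u *\<^sub>R v \<in> \<phi> i ` F" using piece zF by blast
          then obtain w where "w \<in> F" "\<phi> i w = \<phi> i (y + (u / \<alpha> i) *\<^sub>R v)" using img by auto
          then have "y + (u / \<alpha> i) *\<^sub>R v \<in> F" using phi_inj[OF i(1)] by metis
          then show False using b'(3) u1 u2 by blast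
        qed
      qed
    next
      assume s1: "\<sigma> i = -1"
      obtain y where y: "\<phi> i y = z + r *\<^sub>R v" using phi_surj[OF i(1)] by blast
      obtain b' where b': "0 \<le> b'" "b' + c * (r / \<alpha> i) \<le> r / \<alpha> i"
        "\<forall>u. b' \<le> u \<and> u \<le> b' + c * (r / \<alpha> i) \<longrightarrow> y + u *\<^sub>R v \<notin> F"
        using gapb[of y] by blast
      have kb: "\<alpha> i * b' + c * r \<le> r" using key[OF b'(2)] .
      show ?thesis
      proof (intro exI[of _ "r - \<alpha> i * b' - c * r"] conjI allI impI)
        show "0 \<le> r - \<alpha> i * b' - c * r" using kb by simp
        show "r - \<alpha> i * b' - c * r + c * r \<le> r" using ai b'(1) by simp
        fix u assume u: "r - \<alpha> i * b' - c * r \<le> u \<and> u \<le> r - \<alpha> i * b' - c * r + c * r"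
        have u1: "b' \<le> (r - u) / \<alpha> i" using u ai by (simp add: field_simps)
        have u2: "(r - u) / \<alpha> i \<le> b' + c * (r / \<alpha> i)"
        proof -
          have "r - u \<le> \<alpha> i * b' + c * r" using u by linarith
          then have "(r - u) / \<alpha> i \<le> (\<alpha> i * b' + c * r) / \<alpha> i" using ai by (intro divide_right_mono) auto
          also have "\<dots> = b' + c * (r / \<alpha> i)" using ai by (simp add: field_simps)
          finally show ?thesis .
        qed
        have img: "\<phi> i (y + ((r - u) / \<alpha> i) *\<^sub>R v) = z + u *\<^sub>R v"
        proof -
          have "\<phi> i (y + ((r - u) / \<alpha> i) *\<^sub>R v) = z + r *\<^sub>R v + (\<alpha> i * \<sigma> i * ((r - u) / \<alpha> i)) *\<^sub>R v"
            using phi_line[OF i(1)] y by simp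
          also have "\<alpha> i * \<sigma> i * ((r - u) / \<alpha> i) = u - r" using s1 ai by simp
          finally show ?thesis by (simp add: algebra_simps)
        qed
        show "z + u *\<^sub>R v \<notin> F"
        proof
          assume zF: "z + u *\<^sub>R v \<in> F"
          have "0 \<le> u" using u kb by linarith
          moreover have "u \<le> r"
          proof -
            have "0 \<le> \<alpha> i * b'" using ai b'(1) by simp
            then show ?thesis using u by linarith
          qed
          ultimately have "z + u *\<^sub>R v \<in> \<phi> i ` F" using piece zF by blast
          then obtain w where "w \<in> F" "\<phi> i w = \<phi> i (y + ((r - u) / \<alpha> i) *\<^sub>R v)" using img by auto
          then have "y + ((r - u) / \<alpha> i) *\<^sub>R v \<in> F" using phi_inj[OF i(1)] by metis
          then show False using b'(3) u1 u2 by blast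
        qed
      qed
    qed
  qed
qed

end

context ssc_setup begin

lemma gap_scales:
  obtains c r0 where "0 < c" "c \<le> 1" "0 < r0" "\<And>r. 0 < r \<Longrightarrow> r \<le> r0 \<Longrightarrow> gapQ c r"
proof -
  obtain \<delta> where \<delta>: "\<delta> > 0"
    "\<And>i j x y. i < l \<Longrightarrow> j < l \<Longrightarrow> i \<noteq> j \<Longrightarrow> x \<in> F \<Longrightarrow> y \<in> F \<Longrightarrow> \<delta> \<le> dist (\<phi> i x) (\<phi> j y)"
    using sep by blast
  obtain a where a: "0 < a" "a < 1" "\<And>i. i < l \<Longrightarrow> \<alpha> i \<le> a" using amax by blast
  obtain m where m: "0 < m" "\<And>i. i < l \<Longrightarrow> m \<le> \<alpha> i" using amin by blast
  have m1: "m < 1" using m(2)[of 0] alpha_lt1[of 0] l2 by simp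
  define R where "R = \<delta> / 2"
  have R: "0 < R" "R < \<delta>" using \<delta>(1) by (auto simp: R_def)
  define \<Lambda> where "\<Lambda> = R / m"
  have RL: "R \<le> \<Lambda>" using R m m1 by (simp add: \<Lambda>_def field_simps)
  have Lpos: "0 < \<Lambda>" using R m by (simp add: \<Lambda>_def)
  obtain g where g: "g > 0" "g \<le> R"
    "\<And>z. \<exists>b. 0 \<le> b \<and> b + g \<le> R \<and> (\<forall>u. b \<le> u \<and> u \<le> b + g \<longrightarrow> z + u *\<^sub>R v \<notin> F)"
    using gap_fixed[OF R(1)] by blast
  define c where "c = g / \<Lambda>"
  have c: "0 < c" "c \<le> 1" using g Lpos RL by (auto simp: c_def field_simps)
  have base: "gapQ c r" if r: "R \<le> r" "r \<le> \<Lambda>" for r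
    unfolding gapQ_def
  proof
    fix z
    obtain b where b: "0 \<le> b" "b + g \<le> R" "\<forall>u. b \<le> u \<and> u \<le> b + g \<longrightarrow> z + u *\<^sub>R v \<notin> F"
      using g(3) by blast
    have cr: "c * r \<le> g" using r Lpos g unfolding c_def by (simp add: field_simps mult_left_mono)
    show "\<exists>b. 0 \<le> b \<and> b + c * r \<le> r \<and> (\<forall>u. b \<le> u \<and> u \<le> b + c * r \<longrightarrow> z + u *\<^sub>R v \<notin> F)"
      using b cr r by (intro exI[of _ b]) auto
  qed
  have ind: "\<forall>r. R * a ^ n \<le> r \<and> r \<le> \<Lambda> \<longrightarrow> gapQ c r" for n
  proof (induction n)
    case 0 then show ?case using base by simp
  next
    case (Suc n)
    show ?case
    proof (intro allI impI)
      fix r assume r: "R * a ^ Suc n \<le> r \<and> r \<le> \<Lambda>"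
      show "gapQ c r"
      proof (cases "R * a ^ n \<le> r")
        case True then show ?thesis using Suc r by blast
      next
        case False
        have an: "a ^ n \<le> 1" using a by (simp add: power_le_one)
        have rpos: "0 < r" using r R a by (smt (verit) mult_pos_pos zero_less_power)
        have rR: "r < R" using False an R by (smt (verit) mult_left_le)
        show ?thesis
        proof (rule gap_step[OF c rpos _ \<delta>(2)])
          show "r < \<delta>" using rR R by simp
          fix i assume i: "i < l"
          have ai: "0 < \<alpha> i" "\<alpha> i \<le> a" "m \<le> \<alpha> i" using alpha_pos[OF i] a(3)[OF i] m(2)[OF i] by auto
          have "R * a ^ n = R * a ^ Suc n / a" using a by simp
          also have "\<dots> \<le> r / a" using r a by (intro divide_right_mono) auto
          also have "\<dots> \<le> r / \<alpha> i" using rpos ai by (intro divide_left_mono) auto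
          finally have l1: "R * a ^ n \<le> r / \<alpha> i" .
          have "r / \<alpha> i \<le> R / \<alpha> i" using rR ai by (intro divide_right_mono) auto
          also have "\<dots> \<le> R / m" using R ai m by (intro divide_left_mono) auto
          finally have l2: "r / \<alpha> i \<le> \<Lambda>" by (simp add: \<Lambda>_def)
          show "gapQ c (r / \<alpha> i)" using Suc l1 l2 by blast
        qed
      qed
    qed
  qed
  show ?thesis
  proof (rule that[OF c Lpos])
    fix r assume r: "0 < r" "r \<le> \<Lambda>"
    obtain n where "a ^ n < r / R" using real_arch_pow_inv[of "r / R" a] r R a by auto
    then have "R * a ^ n \<le> r" using R by (simp add: field_simps)
    then show "gapQ c r" using ind r by blast
  qed
qed

end

context ssc_setup begin

lemma card_children:
  assumes "e \<in> {a..a + int M - 1}"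
  shows "card ({a..a + int M - 1} - {e}) = M - 1"
  using assms by (simp add: card_Diff_singleton)

lemma grid_count:
  assumes c: "0 < c" "c \<le> 1" and r0: "0 < r0" and Q: "\<And>r. 0 < r \<Longrightarrow> r \<le> r0 \<Longrightarrow> gapQ c r"
  obtains M :: nat and A :: real and k0 where "M \<ge> 2" "A \<ge> 0"
    "\<And>k. k \<ge> k0 \<Longrightarrow> \<exists>C. finite C \<and> real (card C) \<le> A * (real M - 1) ^ k \<and>
        (\<forall>u. z + u *\<^sub>R v \<in> F \<longrightarrow> (\<exists>p\<in>C. dist (z + u *\<^sub>R v) p \<le> 1 / real M ^ k))"
proof -
  define M where "M = nat \<lceil>2 / c\<rceil> + 2"
  have M2: "M \<ge> 2" by (simp add: M_def)
  have "2 / c \<le> real (nat \<lceil>2 / c\<rceil>)" by linarith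
  then have "2 / c \<le> real M" by (simp add: M_def)
  then have cM: "2 \<le> c * real M" using c by (simp add: field_simps)
  have Mpos: "real M > 0" using M2 by simp
  define E where "E = {u. z + u *\<^sub>R v \<in> F}"
  obtain B where B: "B > 0" "\<And>x. x \<in> F \<Longrightarrow> norm x \<le> B" using F_bounded by blast
  define K where "K = B + norm z"
  have K: "\<bar>u\<bar> \<le> K" if "u \<in> E" for u
  proof -
    have "\<bar>u\<bar> = norm ((z + u *\<^sub>R v) - z)" using vunit by simp
    also have "\<dots> \<le> norm (z + u *\<^sub>R v) + norm z" by (rule norm_triangle_ineq4)
    also have "\<dots> \<le> K" using B(2) that by (simp add: E_def K_def)
    finally show ?thesis .
  qed
  have K0: "K \<ge> 0" using B by (simp add: K_def)
  define S where "S k = {j::int. \<exists>u\<in>E. of_int j \<le> u * real M ^ k \<and> u * real M ^ k \<le> of_int j + 1}" for k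
  have finS: "finite (S k)" for k
  proof -
    let ?s = "real M ^ k"
    have spos: "?s > 0" using Mpos by simp
    have "S k \<subseteq> {\<lfloor>- K * ?s\<rfloor> - 1 .. \<lceil>K * ?s\<rceil>}"
    proof
      fix j assume "j \<in> S k"
      then obtain u where u: "u \<in> E" "of_int j \<le> u * ?s" "u * ?s \<le> of_int j + 1" unfolding S_def by blast
      have "\<bar>u * ?s\<bar> \<le> K * ?s" using K[OF u(1)] spos by (simp add: abs_mult)
      then have "of_int j \<le> K * ?s" "- K * ?s - 1 \<le> of_int j" using u by linarith+
      then have "j \<le> \<lceil>K * ?s\<rceil>" "\<lfloor>- K * ?s\<rfloor> - 1 \<le> j" by linarith+
      then show "j \<in> {\<lfloor>- K * ?s\<rfloor> - 1 .. \<lceil>K * ?s\<rceil>}" by simp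
    qed
    then show ?thesis by (rule finite_subset) simp
  qed
  obtain k0 where k0: "(1 / real M) ^ k0 < r0" using real_arch_pow_inv[OF r0, of "1 / real M"] M2 by auto
  have step: "card (S (Suc k)) \<le> (M - 1) * card (S k)" if k: "k \<ge> k0" for k
  proof -
    let ?s = "real M ^ k"
    have spos: "?s > 0" using Mpos by simp
    have "(1 / real M) ^ k \<le> (1 / real M) ^ k0" by (rule power_decreasing) (use k M2 in auto)
    then have "1 / ?s \<le> (1 / real M) ^ k0" by (simp add: power_one_over)
    then have rle: "1 / ?s \<le> r0" using k0 by simp
    have ex: "\<forall>j\<in>S k. \<exists>e. e \<in> {j * int M .. j * int M + int M - 1} \<and> e \<notin> S (Suc k)"
    proof
      fix j assume j: "j \<in> S k"
      obtain b where b: "0 \<le> b" "b + c * (1 / ?s) \<le> 1 / ?s"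
        "\<forall>u. b \<le> u \<and> u \<le> b + c * (1 / ?s) \<longrightarrow> (z + (of_int j / ?s) *\<^sub>R v) + u *\<^sub>R v \<notin> F"
      proof -
        have "gapQ c (1 / ?s)" using Q spos rle by simp
        then have "\<exists>b. 0 \<le> b \<and> b + c * (1 / ?s) \<le> 1 / ?s \<and>
          (\<forall>u. b \<le> u \<and> u \<le> b + c * (1 / ?s) \<longrightarrow> (z + (of_int j / ?s) *\<^sub>R v) + u *\<^sub>R v \<notin> F)"
          unfolding gapQ_def by (rule spec)
        then show ?thesis using that by blast
      qed
      define e where "e = j * int M + \<lceil>b * ?s * real M\<rceil>"
      have "(b + c * (1 / ?s)) * ?s \<le> (1 / ?s) * ?s" using b(2) spos by (intro mult_right_mono) auto
      then have "b * ?s + c \<le> 1" using spos M2 by (simp add: algebra_simps)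
      then have bs: "b * ?s \<le> 1 - c" by linarith
      have "b * ?s * real M \<le> (1 - c) * real M" using bs Mpos by (simp add: mult_right_mono)
      also have "\<dots> \<le> real M - 2" using cM by (simp add: algebra_simps)
      finally have "\<lceil>b * ?s * real M\<rceil> \<le> int M - 2" by (simp add: ceiling_le_iff)
      moreover have "0 \<le> \<lceil>b * ?s * real M\<rceil>"
      proof -
        have x0: "0 \<le> b * ?s * real M" using b(1) spos Mpos by simp
        then show ?thesis by (simp add: zero_le_ceiling)
      qed
      ultimately have erange: "e \<in> {j * int M .. j * int M + int M - 1}" by (simp add: e_def)
      have "e \<notin> S (Suc k)"
      proof
        assume "e \<in> S (Suc k)"
        then obtain u where u: "u \<in> E" "of_int e \<le> u * real M ^ Suc k" "u * real M ^ Suc k \<le> of_int e + 1"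
          unfolding S_def by blast
        have pw: "real M ^ Suc k = ?s * real M" by simp
        have c1: "of_int \<lceil>b * ?s * real M\<rceil> \<le> b * ?s * real M + 1" by simp
        have c2: "b * ?s * real M \<le> of_int \<lceil>b * ?s * real M\<rceil>" by simp
        have eq1: "real_of_int e = of_int j * real M + of_int \<lceil>b * ?s * real M\<rceil>" by (simp add: e_def)
        have eq2: "u * real M ^ Suc k = u * ?s * real M" by simp
        have d1: "(of_int j + b * ?s) * real M = of_int j * real M + b * ?s * real M" by (simp add: distrib_right)
        have d2: "(of_int j + b * ?s + c) * real M = of_int j * real M + b * ?s * real M + c * real M"
          by (simp add: distrib_right)
        have lo: "(of_int j + b * ?s) * real M \<le> (u * ?s) * real M"
          using u(2) c2 eq1 eq2 d1 by linarith
        have hi: "(u * ?s) * real M \<le> (of_int j + b * ?s + c) * real M"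
          using u(3) c1 cM eq1 eq2 d2 by linarith
        have lo': "of_int j + b * ?s \<le> u * ?s" using lo Mpos by (simp only: mult_le_cancel_right_pos)
        have hi': "u * ?s \<le> of_int j + b * ?s + c" using hi Mpos by (simp only: mult_le_cancel_right_pos)
        let ?u' = "u - of_int j / ?s"
        have "(of_int j + b * ?s) / ?s \<le> u" using lo' spos by (simp add: pos_divide_le_eq)
        moreover have "(of_int j + b * ?s) / ?s = of_int j / ?s + b" using spos M2 by (simp add: field_simps)
        ultimately have "b \<le> ?u'" by linarith
        moreover have "?u' \<le> b + c * (1 / ?s)"
        proof -
          have "u \<le> (of_int j + b * ?s + c) / ?s" using hi' spos by (simp add: pos_le_divide_eq)
          moreover have "(of_int j + b * ?s + c) / ?s = of_int j / ?s + b + c * (1 / ?s)"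
            using spos M2 by (simp add: field_simps)
          ultimately show ?thesis by linarith
        qed
        ultimately have "(z + (of_int j / ?s) *\<^sub>R v) + ?u' *\<^sub>R v \<notin> F" using b(3) by blast
        moreover have "(z + (of_int j / ?s) *\<^sub>R v) + ?u' *\<^sub>R v = z + u *\<^sub>R v" by (simp add: algebra_simps)
        ultimately show False using u(1) by (simp add: E_def)
      qed
      then show "\<exists>e. e \<in> {j * int M .. j * int M + int M - 1} \<and> e \<notin> S (Suc k)" using erange by blast
    qed
    then obtain e where e: "\<And>j. j \<in> S k \<Longrightarrow> e j \<in> {j * int M .. j * int M + int M - 1} \<and> e j \<notin> S (Suc k)"
      by metis
    have sub: "S (Suc k) \<subseteq> (\<Union>j\<in>S k. {j * int M .. j * int M + int M - 1} - {e j})"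
    proof
      fix j' assume j': "j' \<in> S (Suc k)"
      then obtain u where u: "u \<in> E" "of_int j' \<le> u * real M ^ Suc k" "u * real M ^ Suc k \<le> of_int j' + 1"
        unfolding S_def by blast
      define p where "p = j' div int M"
      have Mi: "int M > 0" using M2 by simp
      have dm: "p * int M + j' mod int M = j'" unfolding p_def by (rule div_mult_mod_eq)
      have "0 \<le> j' mod int M" "j' mod int M < int M" using Mi by simp_all
      then have pj: "p * int M \<le> j'" "j' \<le> p * int M + int M - 1" using dm by linarith+
      have "real_of_int (p * int M) \<le> real_of_int j'" using pj(1) by (simp only: of_int_le_iff)
      moreover have "real_of_int (j' + 1) \<le> real_of_int (p * int M + int M)" using pj(2) by (simp only: of_int_le_iff)
      ultimately have pjr: "real_of_int p * real M \<le> of_int j'" "of_int j' + 1 \<le> real_of_int p * real M + real M"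
        by simp_all
      have pw: "real M ^ Suc k = ?s * real M" by simp
      have e2: "u * real M ^ Suc k = (u * ?s) * real M" by simp
      have "real_of_int p * real M \<le> (u * ?s) * real M" using pjr(1) u(2) e2 by linarith
      then have a1: "real_of_int p \<le> u * ?s" using Mpos by (simp only: mult_le_cancel_right_pos)
      have "(real_of_int p + 1) * real M = real_of_int p * real M + real M" by (simp add: distrib_right)
      then have "(u * ?s) * real M \<le> (real_of_int p + 1) * real M" using pjr(2) u(3) e2 by linarith
      then have a2: "u * ?s \<le> real_of_int p + 1" using Mpos by (simp only: mult_le_cancel_right_pos)
      have pS: "p \<in> S k" unfolding S_def using u(1) a1 a2 by blast
      have "j' \<noteq> e p" using e[OF pS] j' by blast
      then show "j' \<in> (\<Union>j\<in>S k. {j * int M .. j * int M + int M - 1} - {e j})" using pS pj by auto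
    qed
    have "card (S (Suc k)) \<le> card (\<Union>j\<in>S k. {j * int M .. j * int M + int M - 1} - {e j})"
      by (rule card_mono) (use finS sub in auto)
    also have "\<dots> \<le> (\<Sum>j\<in>S k. card ({j * int M .. j * int M + int M - 1} - {e j}))"
      by (rule card_UN_le[OF finS])
    also have "\<dots> = (\<Sum>j\<in>S k. M - 1)"
      using e card_children by (intro sum.cong) auto
    also have "\<dots> = (M - 1) * card (S k)" by simp
    finally show ?thesis .
  qed
  have growth: "card (S (k0 + n)) \<le> card (S k0) * (M - 1) ^ n" for n
  proof (induction n)
    case 0 then show ?case by simp
  next
    case (Suc n)
    have "card (S (k0 + Suc n)) \<le> (M - 1) * card (S (k0 + n))" using step[of "k0 + n"] by simp
    also have "\<dots> \<le> (M - 1) * (card (S k0) * (M - 1) ^ n)" using Suc by simp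
    finally show ?case by (simp add: algebra_simps)
  qed
  define A where "A = real (card (S k0))"
  show ?thesis
  proof (rule that[OF M2, of A k0])
    show "A \<ge> 0" by (simp add: A_def)
    fix k assume k: "k \<ge> k0"
    let ?s = "real M ^ k"
    have spos: "?s > 0" using Mpos by simp
    define C where "C = (\<lambda>j. z + (of_int j / ?s) *\<^sub>R v) ` S k"
    have "finite C" using finS by (simp add: C_def)
    moreover have "real (card C) \<le> A * (real M - 1) ^ k"
    proof -
      have "card C \<le> card (S k)" unfolding C_def by (rule card_image_le[OF finS])
      also have "\<dots> \<le> card (S k0) * (M - 1) ^ (k - k0)" using growth[of "k - k0"] k by simp
      finally have "real (card C) \<le> real (card (S k0) * (M - 1) ^ (k - k0))" by (simp only: of_nat_le_iff)
      also have "\<dots> = real (card (S k0)) * (real M - 1) ^ (k - k0)" using M2 by (simp add: of_nat_diff)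
      also have "\<dots> \<le> real (card (S k0)) * (real M - 1) ^ k"
        using M2 by (intro mult_left_mono power_increasing) auto
      finally show ?thesis by (simp add: A_def)
    qed
    moreover have "\<forall>u. z + u *\<^sub>R v \<in> F \<longrightarrow> (\<exists>p\<in>C. dist (z + u *\<^sub>R v) p \<le> 1 / real M ^ k)"
    proof (intro allI impI)
      fix u assume uF: "z + u *\<^sub>R v \<in> F"
      define j where "j = \<lfloor>u * ?s\<rfloor>"
      have "of_int j \<le> u * ?s" "u * ?s \<le> of_int j + 1" unfolding j_def by linarith+
      then have jS: "j \<in> S k" using uF unfolding S_def E_def by blast
      have "dist (z + u *\<^sub>R v) (z + (of_int j / ?s) *\<^sub>R v) = \<bar>u - of_int j / ?s\<bar>" by (rule dist_line)
      also have "\<dots> \<le> 1 / ?s"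
      proof -
        have "of_int j / ?s \<le> u" using \<open>of_int j \<le> u * ?s\<close> spos by (simp add: pos_divide_le_eq)
        moreover have "u \<le> (of_int j + 1) / ?s" using \<open>u * ?s \<le> of_int j + 1\<close> spos by (simp add: pos_le_divide_eq)
        moreover have "(of_int j + 1) / ?s = of_int j / ?s + 1 / ?s" by (simp add: add_divide_distrib)
        ultimately have "0 \<le> u - of_int j / ?s" "u - of_int j / ?s \<le> 1 / ?s" by linarith+
        then show ?thesis by simp
      qed
      finally show "\<exists>p\<in>C. dist (z + u *\<^sub>R v) p \<le> 1 / real M ^ k" using jS unfolding C_def by blast
    qed
    ultimately show "\<exists>C. finite C \<and> real (card C) \<le> A * (real M - 1) ^ k \<and>
        (\<forall>u. z + u *\<^sub>R v \<in> F \<longrightarrow> (\<exists>p\<in>C. dist (z + u *\<^sub>R v) p \<le> 1 / real M ^ k))" by blast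
  qed
qed

end

lemma small_ball_bound:
  assumes lim: "((\<lambda>r. ln (m r) / ln r) \<longlongrightarrow> 1) (at_right 0)" and th: "\<theta> < 1"
    and m: "\<And>r. 0 \<le> m r"
  shows "\<exists>n::nat. \<forall>r. 0 < r \<and> r < 1 / real (Suc n) \<longrightarrow> m r \<le> r powr \<theta>"
proof -
  have "eventually (\<lambda>r. \<theta> < ln (m r) / ln r) (at_right 0)" using order_tendstoD(1)[OF lim th] .
  then obtain b where b: "b > 0" "\<And>r. r > 0 \<Longrightarrow> r < b \<Longrightarrow> \<theta> < ln (m r) / ln r"
    unfolding eventually_at_right_field by auto
  have "0 < min b 1" using b(1) by simp
  then obtain n where "inverse (real (Suc n)) < min b 1" using reals_Archimedean by blast
  then have n: "1 / real (Suc n) < min b 1" by (simp add: inverse_eq_divide)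
  have "m r \<le> r powr \<theta>" if r: "0 < r" "r < 1 / real (Suc n)" for r
  proof (cases "m r = 0")
    case True then show ?thesis by simp
  next
    case False
    then have mp: "m r > 0" using m[of r] by simp
    have n': "1 / real (Suc n) < b" "1 / real (Suc n) < 1" using n by (simp_all only: min_less_iff_conj)
    have r1: "r < 1" "r < b" using r n' by linarith+
    have lnr: "ln r < 0" using r r1 by simp
    have "\<theta> < ln (m r) / ln r" using b(2)[OF r(1) r1(2)] .
    then have "ln (m r) < \<theta> * ln r" using lnr by (simp add: pos_less_divide_eq neg_less_divide_eq)
    then have "exp (ln (m r)) < exp (\<theta> * ln r)" by simp
    then show ?thesis using mp r by (simp add: powr_def)
  qed
  then show ?thesis by blast
qed

lemma powr_shrink:
  fixes M :: real and \<theta> :: real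
  assumes M: "M > 1"
  shows "(2 * (1 / M ^ k)) powr \<theta> = 2 powr \<theta> / (M powr \<theta>) ^ k"
proof -
  have "(M ^ k) powr \<theta> = (M powr real k) powr \<theta>" using M by (simp add: powr_realpow)
  also have "\<dots> = M powr (real k * \<theta>)" by (simp add: powr_powr)
  also have "\<dots> = (M powr \<theta>) ^ k" using M by (simp add: powr_power)
  finally have e: "(M ^ k) powr \<theta> = (M powr \<theta>) ^ k" .
  have "(2 * (1 / M ^ k)) powr \<theta> = 2 powr \<theta> * ((1 / M ^ k) powr \<theta>)" by (rule powr_mult)
  also have "(1 / M ^ k) powr \<theta> = 1 / (M ^ k) powr \<theta>" using M by (simp add: powr_divide)
  finally show ?thesis using e by simp
qed

lemma no_dim1:
  fixes \<kappa> :: "(real^2) measure" and L :: "(real^2) set" and M :: nat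
  assumes prob: "prob_space \<kappa>" and sets: "sets \<kappa> = sets borel"
    and AEL: "AE x in \<kappa>. x \<in> L"
    and M2: "M \<ge> 2" and A0: "A \<ge> 0"
    and cover: "\<And>k. k \<ge> k0 \<Longrightarrow> \<exists>C. finite C \<and> real (card C) \<le> A * (real M - 1) ^ k \<and>
        (\<forall>x\<in>L. \<exists>p\<in>C. dist x p \<le> 1 / real M ^ k)"
    and ed: "exact_dimensional \<kappa> 1"
  shows False
proof -
  interpret prob_space \<kappa> by (rule prob)
  have Mg: "real M \<ge> 2" using M2 by simp
  define \<theta> where "\<theta> = ln (real M - 1/2) / ln (real M)"
  have lnM: "ln (real M) > 0" using Mg by simp
  have ln1: "ln (real M - 1/2) > 0" using Mg by simp
  have ln2: "ln (real M - 1/2) < ln (real M)" using Mg by simp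
  have th: "0 < \<theta>" "\<theta> < 1" using lnM ln1 ln2 by (simp_all add: \<theta>_def field_simps)
  have M\<theta>: "real M powr \<theta> = real M - 1/2"
    using Mg lnM by (simp add: powr_def \<theta>_def)
  define q where "q = (real M - 1) / (real M - 1/2)"
  have q: "0 \<le> q" "q < 1" using Mg by (simp_all add: q_def field_simps)
  define G where "G n = {x. \<forall>r. 0 < r \<and> r < 1 / real (Suc n) \<longrightarrow> measure \<kappa> (cball x r) \<le> r powr \<theta>}" for n
  have AEG: "AE x in \<kappa>. \<exists>n. x \<in> G n"
    using ed unfolding exact_dimensional_def
  proof (rule AE_mp)
    show "AE x in \<kappa>. ((\<lambda>r. ln (measure \<kappa> (cball x r)) / ln r) \<longlongrightarrow> 1) (at_right 0) \<longrightarrow> (\<exists>n. x \<in> G n)"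
    proof (intro AE_I2 impI)
      fix x assume "((\<lambda>r. ln (measure \<kappa> (cball x r)) / ln r) \<longlongrightarrow> 1) (at_right 0)"
      from small_ball_bound[OF this th(2)] show "\<exists>n. x \<in> G n" unfolding G_def by auto
    qed
  qed
  have AEGL: "AE x in \<kappa>. x \<in> L \<and> (\<exists>n. x \<in> G n)" using AEL AEG by eventually_elim blast
  have Hex: "\<exists>H. H \<in> sets \<kappa> \<and> G n \<inter> L \<subseteq> H \<and> measure \<kappa> H \<le> (1/2) ^ (n + 2)" for n
  proof -
    have t1: "(\<lambda>k. A * 2 powr \<theta> * q ^ k) \<longlonglongrightarrow> 0"
      using q by (intro tendsto_mult_right_zero LIMSEQ_power_zero) simp
    have ev1: "eventually (\<lambda>k. A * 2 powr \<theta> * q ^ k < (1/2) ^ (n + 2)) sequentially"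
      by (rule order_tendstoD(2)[OF t1]) simp
    have t2: "(\<lambda>k. 2 * (1 / real M) ^ k) \<longlonglongrightarrow> 0"
      using Mg by (intro tendsto_mult_right_zero LIMSEQ_power_zero) simp
    have ev2: "eventually (\<lambda>k. 2 * (1 / real M) ^ k < 1 / real (Suc n)) sequentially"
      by (rule order_tendstoD(2)[OF t2]) simp
    have "eventually (\<lambda>k. k \<ge> k0 \<and> A * 2 powr \<theta> * q ^ k < (1/2) ^ (n + 2) \<and> 2 * (1 / real M) ^ k < 1 / real (Suc n)) sequentially"
      using ev1 ev2 eventually_ge_at_top[of k0] by eventually_elim blast
    then obtain k where k: "k \<ge> k0" "A * 2 powr \<theta> * q ^ k < (1/2) ^ (n + 2)" "2 * (1 / real M) ^ k < 1 / real (Suc n)"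
      unfolding eventually_sequentially by blast
    obtain C where C: "finite C" "real (card C) \<le> A * (real M - 1) ^ k" "\<forall>x\<in>L. \<exists>p\<in>C. dist x p \<le> 1 / real M ^ k"
      using cover[OF k(1)] by blast
    define \<rho> where "\<rho> = 1 / real M ^ k"
    have \<rho>: "\<rho> > 0" "2 * \<rho> < 1 / real (Suc n)" using k(3) Mg by (simp_all add: \<rho>_def power_one_over)
    define C' where "C' = {p\<in>C. cball p \<rho> \<inter> (G n \<inter> L) \<noteq> {}}"
    have finC': "finite C'" using C(1) by (simp add: C'_def)
    define H where "H = (\<Union>p\<in>C'. cball p \<rho>)"
    have Hs: "H \<in> sets \<kappa>" unfolding H_def sets using finC' by (intro sets.finite_UN borel_closed) auto
    have sub: "G n \<inter> L \<subseteq> H"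
    proof
      fix x assume x: "x \<in> G n \<inter> L"
      then obtain p where p: "p \<in> C" "dist x p \<le> \<rho>" using C(3) unfolding \<rho>_def by blast
      then have "x \<in> cball p \<rho>" by (simp add: dist_commute)
      then have "p \<in> C'" using x p(1) unfolding C'_def by blast
      then show "x \<in> H" unfolding H_def using \<open>x \<in> cball p \<rho>\<close> by blast
    qed
    have ball: "measure \<kappa> (cball p \<rho>) \<le> (2 * \<rho>) powr \<theta>" if p: "p \<in> C'" for p
    proof -
      obtain y where y: "y \<in> cball p \<rho>" "y \<in> G n" using p unfolding C'_def by blast
      have "cball p \<rho> \<subseteq> cball y (2 * \<rho>)"
      proof
        fix w assume "w \<in> cball p \<rho>"
        then have "dist y w \<le> dist y p + dist p w" "dist y p \<le> \<rho>" "dist p w \<le> \<rho>"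
          using y(1) dist_triangle[of y w p] by (auto simp: dist_commute)
        then show "w \<in> cball y (2 * \<rho>)" by simp
      qed
      then have "measure \<kappa> (cball p \<rho>) \<le> measure \<kappa> (cball y (2 * \<rho>))"
        by (intro finite_measure_mono) (auto simp: sets)
      also have "\<dots> \<le> (2 * \<rho>) powr \<theta>" using y(2) \<rho> unfolding G_def by simp
      finally show ?thesis .
    qed
    have "measure \<kappa> H \<le> (\<Sum>p\<in>C'. measure \<kappa> (cball p \<rho>))"
      unfolding H_def by (rule measure_UNION_le[OF finC']) (auto simp: sets)
    also have "\<dots> \<le> (\<Sum>p\<in>C'. (2 * \<rho>) powr \<theta>)" using ball by (intro sum_mono) auto
    also have "\<dots> = real (card C') * (2 * \<rho>) powr \<theta>" by simp
    also have "\<dots> \<le> real (card C) * (2 * \<rho>) powr \<theta>"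
      using C(1) by (intro mult_right_mono) (auto simp: C'_def intro: card_mono)
    also have "\<dots> \<le> A * (real M - 1) ^ k * (2 * \<rho>) powr \<theta>" using C(2) by (intro mult_right_mono) auto
    also have "(2 * \<rho>) powr \<theta> = 2 powr \<theta> / (real M - 1/2) ^ k"
      unfolding \<rho>_def using powr_shrink[of "real M" k \<theta>] Mg M\<theta> by simp
    also have "A * (real M - 1) ^ k * (2 powr \<theta> / (real M - 1/2) ^ k) = A * 2 powr \<theta> * q ^ k"
      by (simp add: q_def power_divide)
    finally have "measure \<kappa> H \<le> (1/2) ^ (n + 2)" using k(2) by linarith
    then show ?thesis using Hs sub by blast
  qed
  then obtain H where H: "\<And>n. H n \<in> sets \<kappa>" "\<And>n. G n \<inter> L \<subseteq> H n" "\<And>n. measure \<kappa> (H n) \<le> (1/2) ^ (n + 2)"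
    by metis
  have Us: "(\<Union>n. H n) \<in> sets \<kappa>" using H(1) by blast
  have "AE x in \<kappa>. x \<in> (\<Union>n. H n)" using AEGL by eventually_elim (use H(2) in blast)
  then have p1: "measure \<kappa> (\<Union>n. H n) = 1" using AE_in_set_eq_1[OF Us] by simp
  have sg: "summable (\<lambda>n. (1/2::real) ^ (n + 2))" using summable_geometric[of "1/2::real"]
    by (simp add: power_add summable_mult2)
  have sm: "summable (\<lambda>n. measure \<kappa> (H n))"
    by (rule summable_comparison_test'[OF sg]) (use H(3) in simp)
  have "measure \<kappa> (\<Union>n. H n) \<le> (\<Sum>n. measure \<kappa> (H n))"
    by (rule finite_measure_subadditive_countably) (use H(1) sm in auto)
  also have "\<dots> \<le> (\<Sum>n. (1/2::real) ^ (n + 2))" by (rule suminf_le[OF H(3) sm sg])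
  also have "(\<Sum>n. (1/2::real) ^ (n + 2)) = 1/2"
  proof -
    have "(\<lambda>n. (1/2::real) ^ (n + 2)) = (\<lambda>n. (1/4) * (1/2) ^ n)" by (simp add: power_add)
    moreover have "(\<Sum>n. (1/4::real) * (1/2) ^ n) = 1/4 * 2"
      using suminf_mult[OF summable_geometric[of "1/2::real"], of "1/4"] suminf_geometric[of "1/2::real"] by simp
    ultimately show ?thesis by simp
  qed
  finally show False using p1 by simp
qed


lemma support:
  assumes ifs: "is_IFS l \<alpha> Orth t" and att: "is_attractor l \<alpha> Orth t F"
    and ssm: "self_similar_measure l \<alpha> Orth t p \<mu>"
  shows "AE x in \<mu>. x \<in> F"
proof -
  have prob: "prob_space \<mu>" and sets: "sets \<mu> = sets borel" and p: "\<And>i. i < l \<Longrightarrow> 0 < p i"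
    and psum: "(\<Sum>i<l. p i) = 1"
    and ss: "\<And>A. A \<in> sets borel \<Longrightarrow> emeasure \<mu> A = (\<Sum>i<l. ennreal (p i) * emeasure \<mu> (sim_map \<alpha> Orth t i -` A))"
    using ssm unfolding self_similar_measure_def by auto
  interpret prob_space \<mu> by (rule prob)
  have l2: "l \<ge> 2" and ap: "\<And>i. i < l \<Longrightarrow> 0 < \<alpha> i" and a1: "\<And>i. i < l \<Longrightarrow> \<alpha> i < 1"
    and orth: "\<And>i. i < l \<Longrightarrow> orthogonal_matrix (Orth i)"
    using ifs unfolding is_IFS_def by auto
  have Fne: "F \<noteq> {}" and Fc: "compact F" and Feq: "F = (\<Union>i<l. sim_map \<alpha> Orth t i ` F)"
    using att unfolding is_attractor_def by auto
  have Fcl: "closed F" using Fc compact_imp_closed by blast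
  let ?a = "Max (\<alpha> ` {..<l})"
  have "0 \<in> {..<l}" using l2 by simp
  then have ne: "\<alpha> ` {..<l} \<noteq> {}" by blast
  have "?a \<in> \<alpha> ` {..<l}" using Max_in[OF _ ne] by simp
  then have a: "0 < ?a" "?a < 1" using ap a1 by auto
  have ale: "\<alpha> i \<le> ?a" if "i < l" for i using that by (intro Max_ge) auto
  have contr: "infdist (sim_map \<alpha> Orth t i x) F \<le> ?a * infdist x F" if i: "i < l" for i x
  proof -
    obtain f where f: "f \<in> F" "infdist x F = dist x f" using infdist_attains_inf[OF Fcl Fne] by blast
    have "sim_map \<alpha> Orth t i f \<in> F" using Feq f(1) i by blast
    then have "infdist (sim_map \<alpha> Orth t i x) F \<le> dist (sim_map \<alpha> Orth t i x) (sim_map \<alpha> Orth t i f)"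
      by (rule infdist_le)
    also have "\<dots> = \<alpha> i * dist x f"
    proof -
      have "sim_map \<alpha> Orth t i x - sim_map \<alpha> Orth t i f = \<alpha> i *\<^sub>R (Orth i *v (x - f))"
        by (simp add: sim_map_def matrix_vector_mult_diff_distrib scaleR_diff_right)
      then show ?thesis using ap[OF i] orth_norm[OF orth[OF i]] by (simp add: dist_norm)
    qed
    also have "\<dots> \<le> ?a * dist x f" using ale[OF i] by (intro mult_right_mono) auto
    finally show ?thesis using f(2) by simp
  qed
  define U where "U e = {x. e < infdist x F}" for e
  have Uo: "open (U e)" for e unfolding U_def
    by (rule open_Collect_less) (auto intro: continuous_intros)
  have Us: "U e \<in> sets \<mu>" for e using Uo sets by (simp add: borel_open)
  have pre: "sim_map \<alpha> Orth t i -` U e \<subseteq> U (e / ?a)" if i: "i < l" "0 \<le> e" for i e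
  proof
    fix x assume "x \<in> sim_map \<alpha> Orth t i -` U e"
    then have "e < infdist (sim_map \<alpha> Orth t i x) F" by (simp add: U_def)
    also have "\<dots> \<le> ?a * infdist x F" by (rule contr[OF i(1)])
    finally show "x \<in> U (e / ?a)" using a by (simp add: U_def field_simps)
  qed
  have step: "measure \<mu> (U e) \<le> measure \<mu> (U (e / ?a))" if e: "0 \<le> e" for e
  proof -
    have "emeasure \<mu> (U e) = (\<Sum>i<l. ennreal (p i) * emeasure \<mu> (sim_map \<alpha> Orth t i -` U e))"
      using ss Us sets by simp
    also have "\<dots> \<le> (\<Sum>i<l. ennreal (p i) * emeasure \<mu> (U (e / ?a)))"
      using pre e by (intro sum_mono mult_left_mono emeasure_mono Us) auto
    also have "\<dots> = (\<Sum>i<l. ennreal (p i)) * emeasure \<mu> (U (e / ?a))" by (simp add: sum_distrib_right)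
    also have "(\<Sum>i<l. ennreal (p i)) = 1" using p psum by (subst sum_ennreal) (auto intro: less_imp_le)
    finally show ?thesis by (simp add: emeasure_eq_measure)
  qed
  have zero: "measure \<mu> (U e) = 0" if e: "0 < e" for e
  proof -
    define V where "V n = U (e / ?a ^ n)" for n
    have le: "measure \<mu> (U e) \<le> measure \<mu> (V n)" for n
    proof (induction n)
      case 0 then show ?case by (simp add: V_def)
    next
      case (Suc n)
      have "measure \<mu> (V n) \<le> measure \<mu> (U (e / ?a ^ n / ?a))"
        unfolding V_def using e a by (intro step) auto
      then show ?case using Suc by (simp add: V_def field_simps)
    qed
    have dec: "decseq V"
    proof (rule decseq_SucI)
      fix n
      have "e / ?a ^ n \<le> e / ?a ^ Suc n" using e a
        by (intro divide_left_mono) (auto simp: mult_left_le_one_le)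
      then show "V (Suc n) \<subseteq> V n" unfolding V_def U_def by auto
    qed
    have empty: "(\<Inter>n. V n) = {}"
    proof (rule equals0I)
      fix x assume x: "x \<in> (\<Inter>n. V n)"
      have "0 < e / (infdist x F + 1)" using e infdist_nonneg[of x F] by simp
      then obtain n where n: "?a ^ n < e / (infdist x F + 1)" using real_arch_pow_inv a by blast
      then have "infdist x F + 1 < e / ?a ^ n" using a infdist_nonneg[of x F] by (simp add: field_simps)
      moreover have "e / ?a ^ n < infdist x F" using x unfolding V_def U_def by auto
      ultimately show False by simp
    qed
    have "(\<lambda>n. measure \<mu> (V n)) \<longlonglongrightarrow> measure \<mu> (\<Inter>n. V n)"
    proof -
      have Vs: "range V \<subseteq> sets \<mu>" using Us by (auto simp: V_def)
      show ?thesis by (rule finite_Lim_measure_decseq[OF Vs dec])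
    qed
    then have "(\<lambda>n. measure \<mu> (V n)) \<longlonglongrightarrow> 0" using empty by simp
    then have "measure \<mu> (U e) \<le> 0" using le by (intro LIMSEQ_le_const) auto
    then show ?thesis using measure_nonneg[of \<mu> "U e"] by linarith
  qed
  have "AE x in \<mu>. x \<notin> U (1 / real (Suc n))" for n
  proof (rule AE_I')
    show "U (1 / real (Suc n)) \<in> null_sets \<mu>" using zero[of "1 / real (Suc n)"] Us
      by (simp add: null_sets_def emeasure_eq_measure)
  qed auto
  then have "AE x in \<mu>. \<forall>n. x \<notin> U (1 / real (Suc n))" by (simp add: AE_all_countable)
  then show ?thesis
  proof (rule eventually_mono)
    fix x assume h: "\<forall>n. x \<notin> U (1 / real (Suc n))"
    show "x \<in> F"
    proof (rule ccontr)
      assume "x \<notin> F"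
      then have "0 < infdist x F" using infdist_pos_not_in_closed[OF Fcl Fne] by blast
      then obtain n where "inverse (real (Suc n)) < infdist x F" using reals_Archimedean by blast
      then have "x \<in> U (1 / real (Suc n))" by (simp add: U_def inverse_eq_divide)
      then show False using h by blast
    qed
  qed
qed


lemma line_basis:
  fixes V :: "(real^2) set"
  assumes "subspace V" "dim V = 1"
  shows "\<exists>v. norm v = 1 \<and> V = range (\<lambda>k. k *\<^sub>R v)"
proof -
  obtain B where B: "B \<subseteq> V" "independent B" "V \<subseteq> span B" "card B = dim V" by (rule basis_exists)
  have "card B = 1" using B(4) assms(2) by simp
  then have "\<exists>b. B = {b}" by (simp add: card_1_singleton_iff)
  then obtain b where b: "B = {b}" by blast
  have b0: "b \<noteq> 0" using B(2) b dependent_zero by blast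
  have "span {b} \<subseteq> V" using B(1) b assms(1) by (intro span_minimal) auto
  then have Vb: "V = range (\<lambda>k. k *\<^sub>R b)" using B(3) b by (auto simp: span_singleton)
  define v where "v = (1 / norm b) *\<^sub>R b"
  have nv: "norm v = 1" using b0 by (simp add: v_def)
  have "range (\<lambda>k. k *\<^sub>R b) = range (\<lambda>k. k *\<^sub>R v)"
  proof
    show "range (\<lambda>k. k *\<^sub>R b) \<subseteq> range (\<lambda>k. k *\<^sub>R v)"
    proof
      fix x assume "x \<in> range (\<lambda>k. k *\<^sub>R b)"
      then obtain k where "x = k *\<^sub>R b" by auto
      then have "x = (k * norm b) *\<^sub>R v" using b0 by (simp add: v_def)
      then show "x \<in> range (\<lambda>k. k *\<^sub>R v)" by blast
    qed
    show "range (\<lambda>k. k *\<^sub>R v) \<subseteq> range (\<lambda>k. k *\<^sub>R b)"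
    proof
      fix x assume "x \<in> range (\<lambda>k. k *\<^sub>R v)"
      then obtain k where "x = k *\<^sub>R v" by auto
      then have "x = (k / norm b) *\<^sub>R b" by (simp add: v_def)
      then show "x \<in> range (\<lambda>k. k *\<^sub>R b)" by blast
    qed
  qed
  then show ?thesis using Vb nv by blast
qed

lemma orth_proj_line:
  assumes v: "norm v = 1" and V: "V = range (\<lambda>k. k *\<^sub>R v)"
  shows "orth_proj (orthogonal_comp V) x = x - (x \<bullet> v) *\<^sub>R v"
proof -
  have vv: "v \<bullet> v = 1" using v by (simp add: norm_eq_1)
  let ?W = "orthogonal_comp V"
  have inW: "y \<in> ?W \<longleftrightarrow> y \<bullet> v = 0" for y
  proof
    assume "y \<in> ?W"
    then have "orthogonal (1 *\<^sub>R v) y" unfolding orthogonal_comp_def V by blast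
    then show "y \<bullet> v = 0" by (simp add: orthogonal_def inner_commute)
  next
    assume "y \<bullet> v = 0"
    then show "y \<in> ?W" unfolding orthogonal_comp_def V orthogonal_def by (auto simp: inner_commute)
  qed
  let ?y0 = "x - (x \<bullet> v) *\<^sub>R v"
  show ?thesis unfolding orth_proj_def
  proof (rule the_equality)
    show "?y0 \<in> ?W \<and> x - ?y0 \<in> orthogonal_comp ?W"
    proof
      show "?y0 \<in> ?W" unfolding inW using vv by (simp add: inner_diff_left)
      have e: "x - ?y0 = (x \<bullet> v) *\<^sub>R v" by simp
      have "w \<bullet> (x - ?y0) = 0" if "w \<in> ?W" for w
        using inW[of w] that unfolding e by simp
      then show "x - ?y0 \<in> orthogonal_comp ?W"
        unfolding orthogonal_comp_def orthogonal_def by blast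
    qed
  next
    fix y assume y: "y \<in> ?W \<and> x - y \<in> orthogonal_comp ?W"
    have yv: "y \<bullet> v = 0" using y inW by blast
    have "rot v \<in> ?W" unfolding inW by (simp add: rot_inner)
    then have "orthogonal (rot v) (x - y)" using y unfolding orthogonal_comp_def by blast
    then have yr: "y \<bullet> rot v = x \<bullet> rot v" by (simp add: orthogonal_def inner_diff_right inner_commute)
    have "y = (y \<bullet> v) *\<^sub>R v + (y \<bullet> rot v) *\<^sub>R rot v" by (rule decomp2[OF v])
    also have "\<dots> = (x \<bullet> rot v) *\<^sub>R rot v" using yv yr by simp
    also have "\<dots> = ?y0" using decomp2[OF v, of x] by (simp add: algebra_simps)
    finally show "y = ?y0" .
  qed
qed


lemma (in ssc_setup) slice_no_dim1:
  assumes prob: "prob_space \<kappa>" and sets: "sets \<kappa> = sets borel"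
    and line: "AE x in \<kappa>. \<exists>u. x = z + u *\<^sub>R v" and inF: "AE x in \<kappa>. x \<in> F"
    and ed: "exact_dimensional \<kappa> 1"
  shows False
proof -
  define L where "L = {x. \<exists>u. x = z + u *\<^sub>R v \<and> x \<in> F}"
  have AEL: "AE x in \<kappa>. x \<in> L" using line inF by eventually_elim (auto simp: L_def)
  show False
  proof (rule gap_scales)
    fix c r0 assume c: "0 < c" "c \<le> 1" "0 < r0" "\<And>r. 0 < r \<Longrightarrow> r \<le> r0 \<Longrightarrow> gapQ c r"
    show False
    proof (rule grid_count[OF c(1,2,3,4), where z = z])
      fix M :: nat and A :: real and k0 :: nat
      assume M: "M \<ge> 2" "A \<ge> 0"
        "\<And>k. k \<ge> k0 \<Longrightarrow> \<exists>C. finite C \<and> real (card C) \<le> A * (real M - 1) ^ k \<and>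
          (\<forall>u. z + u *\<^sub>R v \<in> F \<longrightarrow> (\<exists>p\<in>C. dist (z + u *\<^sub>R v) p \<le> 1 / real M ^ k))"
      have cover: "\<exists>C. finite C \<and> real (card C) \<le> A * (real M - 1) ^ k \<and>
            (\<forall>x\<in>L. \<exists>p\<in>C. dist x p \<le> 1 / real M ^ k)" if k: "k \<ge> k0" for k
      proof -
        obtain C where C: "finite C" "real (card C) \<le> A * (real M - 1) ^ k"
          "\<forall>u. z + u *\<^sub>R v \<in> F \<longrightarrow> (\<exists>p\<in>C. dist (z + u *\<^sub>R v) p \<le> 1 / real M ^ k)"
          using M(3)[OF k] by blast
        have "\<forall>x\<in>L. \<exists>p\<in>C. dist x p \<le> 1 / real M ^ k" using C(3) unfolding L_def by blast
        then show ?thesis using C(1,2) by blast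
      qed
      show False by (rule no_dim1[OF prob sets AEL M(1) M(2) cover ed])
    qed
  qed
qed

theorem proposition1p2:
  fixes l :: nat and \<alpha> :: "nat \<Rightarrow> real" and Orth :: "nat \<Rightarrow> real^2^2" and t :: "nat \<Rightarrow> real^2"
    and p :: "nat \<Rightarrow> real" and F :: "(real^2) set" and \<mu> :: "(real^2) measure"
  assumes "is_IFS l \<alpha> Orth t"
    and "is_attractor l \<alpha> Orth t F"
    and "\<not> in_affine_line F"
    and "self_similar_measure l \<alpha> Orth t p \<mu>"
  shows "((infinite (gen_group l Orth) \<or> card (gen_group l Orth) \<ge> 5
            \<or> infinite {A \<in> gen_group l Orth. det A = 1} \<or> card {A \<in> gen_group l Orth. det A = 1} > 2)
           \<longrightarrow> \<not> admits_1_slicing l Orth \<mu>)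
         \<and> (SSC l \<alpha> Orth t F \<longrightarrow> \<not> admits_1_slicing l Orth \<mu>)"
proof -
  note ifs = assms(1) and att = assms(2) and ssm = assms(4)
  have orth: "\<And>i. i < l \<Longrightarrow> orthogonal_matrix (Orth i)" using ifs unfolding is_IFS_def by auto
  have line_info: "\<exists>v. norm v = 1 \<and> V = range (\<lambda>k. k *\<^sub>R v) \<and> (\<forall>i<l. good v (Orth i))"
    if V: "subspace V" "dim V = 1" "\<forall>i<l. (\<lambda>z. Orth i *v z) ` V = V" for V
  proof -
    obtain v where v: "norm v = 1" "V = range (\<lambda>k. k *\<^sub>R v)" using line_basis[OF V(1,2)] by blast
    have "good v (Orth i)" if i: "i < l" for i
    proof -
      have inv: "(\<lambda>z. Orth i *v z) ` range (\<lambda>k. k *\<^sub>R v) = range (\<lambda>k. k *\<^sub>R v)" using V(3) v(2) i by simp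
      have "invertible (Orth i)" using orth[OF i] unfolding orthogonal_matrix_def invertible_def by blast
      then show ?thesis unfolding good_def using orth_fix_line[OF orth[OF i] v(1) inv] by blast
    qed
    then show ?thesis using v by blast
  qed
  have part1: "\<not> admits_1_slicing l Orth \<mu>"
    if h: "infinite (gen_group l Orth) \<or> card (gen_group l Orth) \<ge> 5
            \<or> infinite {A \<in> gen_group l Orth. det A = 1} \<or> card {A \<in> gen_group l Orth. det A = 1} > 2"
  proof
    assume "admits_1_slicing l Orth \<mu>"
    then obtain V where V: "subspace V" "dim V = 1" "\<forall>i<l. (\<lambda>z. Orth i *v z) ` V = V"
      unfolding admits_1_slicing_def by blast
    obtain v where v: "norm v = 1" "\<forall>i<l. good v (Orth i)" using line_info[OF V] by blast
    have "\<And>A. A \<in> gen_group l Orth \<Longrightarrow> good v A" using good_group v(2) by blast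
    then have "finite (gen_group l Orth) \<and> card (gen_group l Orth) \<le> 4 \<and> finite {A \<in> gen_group l Orth. det A = 1}
        \<and> card {A \<in> gen_group l Orth. det A = 1} \<le> 2" by (rule part1_core[OF v(1)])
    then show False using h by linarith
  qed
  have part2: "\<not> admits_1_slicing l Orth \<mu>" if ssc: "SSC l \<alpha> Orth t F"
  proof
    assume "admits_1_slicing l Orth \<mu>"
    then obtain V \<kappa> where V: "subspace V" "dim V = 1" "\<forall>i<l. (\<lambda>z. Orth i *v z) ` V = V"
      and dis: "is_disintegration \<mu> (orth_proj (orthogonal_comp V)) \<kappa>"
      and ae: "AE y in distr \<mu> borel (orth_proj (orthogonal_comp V)). exact_dimensional (\<kappa> y) 1"
      unfolding admits_1_slicing_def by blast
    obtain v where v: "norm v = 1" "V = range (\<lambda>k. k *\<^sub>R v)" "\<forall>i<l. good v (Orth i)"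
      using line_info[OF V] by blast
    have vinv: "\<forall>i<l. \<exists>s. (s = 1 \<or> s = -1) \<and> Orth i *v v = s *\<^sub>R v" using v(3) unfolding good_def by blast
    interpret S: ssc_setup l \<alpha> Orth t F v using ifs att ssc v(1) vinv by unfold_locales
    define P where "P = orth_proj (orthogonal_comp V)"
    have Px: "P x = x - (x \<bullet> v) *\<^sub>R v" for x unfolding P_def by (rule orth_proj_line[OF v(1,2)])
    define N where "N = distr \<mu> borel P"
    have ssm': "prob_space \<mu>" "sets \<mu> = sets borel" using ssm unfolding self_similar_measure_def by auto
    interpret mu: prob_space \<mu> by (rule ssm'(1))
    have d1: "AE y in N. prob_space (\<kappa> y) \<and> sets (\<kappa> y) = sets borel \<and> emeasure (\<kappa> y) (P -` {y}) = 1"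
      and d2: "\<And>A. A \<in> sets borel \<Longrightarrow> (\<lambda>y. emeasure (\<kappa> y) A) \<in> borel_measurable borel \<and>
         emeasure \<mu> A = (\<integral>\<^sup>+ y. emeasure (\<kappa> y) A \<partial>N)"
      using dis unfolding is_disintegration_def N_def P_def by auto
    have spmu: "space \<mu> = UNIV" using sets_eq_imp_space_eq[OF ssm'(2)] by simp
    have AEF: "AE x in \<mu>. x \<in> F" by (rule support[OF ifs att ssm])
    have Fb: "- F \<in> sets borel" using S.F_closed by (simp add: borel_closed)
    have "emeasure \<mu> (- F) = 0"
      using AEF by (subst (asm) AE_iff_measurable[of "- F"]) (auto simp: ssm'(2) Fb spmu)
    then have "(\<integral>\<^sup>+ y. emeasure (\<kappa> y) (- F) \<partial>N) = 0" using d2[OF Fb] by simp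
    moreover have "(\<lambda>y. emeasure (\<kappa> y) (- F)) \<in> borel_measurable N"
      using d2[OF Fb] by (simp add: N_def cong: measurable_cong_sets)
    ultimately have d3: "AE y in N. emeasure (\<kappa> y) (- F) = 0" using nn_integral_0_iff_AE by blast
    have allAE: "AE y in N. (prob_space (\<kappa> y) \<and> sets (\<kappa> y) = sets borel \<and> emeasure (\<kappa> y) (P -` {y}) = 1)
        \<and> emeasure (\<kappa> y) (- F) = 0 \<and> exact_dimensional (\<kappa> y) 1"
      using d1 d3 ae unfolding N_def P_def by eventually_elim blast
    have "\<exists>y. (prob_space (\<kappa> y) \<and> sets (\<kappa> y) = sets borel \<and> emeasure (\<kappa> y) (P -` {y}) = 1)
        \<and> emeasure (\<kappa> y) (- F) = 0 \<and> exact_dimensional (\<kappa> y) 1"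
    proof (rule ccontr)
      assume "\<not> ?thesis"
      then have "AE y in N. False" using allAE by (rule_tac eventually_mono) auto
      then have "AE y in N. emeasure (\<kappa> y) UNIV = 0" by (rule eventually_mono) simp
      then have "(\<integral>\<^sup>+ y. emeasure (\<kappa> y) UNIV \<partial>N) = 0" by (simp add: nn_integral_cong_AE)
      moreover have "emeasure \<mu> UNIV = 1" using mu.emeasure_space_1 spmu by simp
      ultimately show False using d2[of UNIV] by simp
    qed
    then obtain y where y: "prob_space (\<kappa> y)" "sets (\<kappa> y) = sets borel" "emeasure (\<kappa> y) (P -` {y}) = 1"
      "emeasure (\<kappa> y) (- F) = 0" "exact_dimensional (\<kappa> y) 1" by blast
    interpret K: prob_space "\<kappa> y" by (rule y(1))
    have spK: "space (\<kappa> y) = UNIV" using sets_eq_imp_space_eq[OF y(2)] by simp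
    have Pm: "P -` {y} \<in> sets (\<kappa> y)"
    proof (rule ccontr)
      assume "P -` {y} \<notin> sets (\<kappa> y)"
      then have "emeasure (\<kappa> y) (P -` {y}) = 0" by (rule emeasure_notin_sets)
      then show False using y(3) by simp
    qed
    have "P -` {y} \<noteq> {}" using y(3) by auto
    then obtain x0 where x0: "P x0 = y" by auto
    have "measure (\<kappa> y) (P -` {y}) = 1" using y(3) K.emeasure_eq_measure by simp
    then have AEP: "AE x in \<kappa> y. x \<in> P -` {y}" using K.AE_in_set_eq_1[OF Pm] by simp
    have line: "AE x in \<kappa> y. \<exists>u. x = x0 + u *\<^sub>R v"
      using AEP
    proof (rule eventually_mono)
      fix x assume "x \<in> P -` {y}"
      then have "P x = P x0" using x0 by simp
      then have "x - (x \<bullet> v) *\<^sub>R v = x0 - (x0 \<bullet> v) *\<^sub>R v" using Px by simp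
      then have "x = x0 + (x \<bullet> v - x0 \<bullet> v) *\<^sub>R v" by (simp add: algebra_simps)
      then show "\<exists>u. x = x0 + u *\<^sub>R v" by blast
    qed
    have inF: "AE x in \<kappa> y. x \<in> F"
    proof (rule AE_I')
      show "- F \<in> null_sets (\<kappa> y)" using y(4) Fb y(2) by (simp add: null_sets_def)
    qed auto
    show False by (rule S.slice_no_dim1[OF y(1) y(2) line inF y(5)])
  qed
  show ?thesis using part1 part2 by blast
qed


end
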